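(* For every nonnegative integer $n$ and complex parameters $\alpha,a,b,\beta,\gamma,u,v$ (with all denominators nonzero), \begin{align*} \sum_{k=0}^{n} \frac{(q^{-n}, \alpha q^n, \alpha \beta ab/q, \alpha \gamma ab/q ; q)_k\, q^k}{(q, \alpha a, \alpha b, \beta \gamma uv; q)_k} A_k =\frac{(q/a, q/b; q)_n}{(\alpha a, \alpha b; q)_n}\biggl(\frac{\alpha ab}{q}\biggr)^n\sum_{k=0}^{n} \frac{(q^{-n}, \alpha q^n, \beta, \gamma; q)_k\, q^k}{(q, q/a, q/b, \beta \gamma uv; q)_k}B_k, \end{align*} where \[ A_k= {}_3\phi_2 \biggl({{q^{-k}, \alpha ab/(qu), \alpha ab/(qv)}\atop{\alpha \beta ab/q, \alpha \gamma ab/q }}; q, \beta \gamma uv q^k \biggr),\qquad B_k={}_3\phi_2 \biggl({{q^{-k}, 1/u, 1/v}\atop{\beta, \gamma}}; q, \beta \gamma uv q^k\biggr). \]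
   Context: Throughout, $q$ is a complex number with $0<|q|<1$. For $x\in\mathbb{C}$ and an integer $n\ge 0$, $(x;q)_n=\prod_{k=0}^{n-1}(1-xq^k)$, and $(x_1,\dots,x_m;q)_n=(x_1;q)_n\cdots(x_m;q)_n$. The basic hypergeometric series is ${}_r\phi_s\Bigl({{a_1,\dots,a_r}\atop{b_1,\dots,b_s}};q,z\Bigr)=\sum_{n=0}^\infty \frac{(a_1,\dots,a_r;q)_n}{(q,b_1,\dots,b_s;q)_n}\bigl((-1)^nq^{n(n-1)/2}\bigr)^{1+s-r}z^n$; with an upper parameter $q^{-k}$ it is a finite sum. *)

theory Defs
  imports Complex_Main
begin

definition qpoch :: "complex \<Rightarrow> complex \<Rightarrow> nat \<Rightarrow> complex" where
  "qpoch x q n = (\<Prod>k<n. 1 - x * q ^ k)"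

definition qpochs :: "complex list \<Rightarrow> complex \<Rightarrow> nat \<Rightarrow> complex" where
  "qpochs xs q n = prod_list (map (\<lambda>x. qpoch x q n) xs)"

definition bhs :: "complex list \<Rightarrow> complex list \<Rightarrow> complex \<Rightarrow> complex \<Rightarrow> complex" where
  "bhs as bs q z = (\<Sum>n. qpochs as q n / (qpoch q q n * qpochs bs q n)
      * ((-1) ^ n * q ^ (n * (n - 1) div 2)) powi (1 + int (length bs) - int (length as))
      * z ^ n)"

end

theory Submission imports Defs begin

lemma qpoch_0[simp]: "qpoch x q 0 = 1"
  by (simp add: qpoch_def)

lemma qpoch_Suc: "qpoch x q (Suc n) = qpoch x q n * (1 - x*q^n)"
  by (simp add: qpoch_def)

lemma qpoch_add: "qpoch x q (m+n) = qpoch x q m * qpoch (x*q^m) q n"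
proof (induction n)
  case 0 then show ?case by simp
next
  case (Suc n)
  then show ?case by (simp add: qpoch_Suc power_add mult_ac)
qed

lemma qpoch_Suc_left: "qpoch x q (Suc n) = (1-x) * qpoch (x*q) q n"
  using qpoch_add[of x q 1 n] by (simp add: qpoch_def)

lemma qpoch_diff: "k \<le> n \<Longrightarrow> qpoch x q n = qpoch x q k * qpoch (x*q^k) q (n-k)"
  using qpoch_add[of x q k "n-k"] by simp

definition qb :: "complex \<Rightarrow> nat \<Rightarrow> nat \<Rightarrow> complex" where
  "qb q n k = (if k \<le> n then qpoch q q n / (qpoch q q k * qpoch q q (n-k)) else 0)"

definition tri :: "nat \<Rightarrow> nat" where "tri j = j * (j - 1) div 2"

lemma tri_0[simp]: "tri 0 = 0" by (simp add: tri_def)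
lemma tri_Suc: "tri (Suc j) = tri j + j"
proof -
  have "Suc j * j = j * (j - 1) + 2 * j" by (cases j) auto
  then show ?thesis unfolding tri_def by simp
qed

lemma tri2: "2 * tri j = j * (j - 1)"
proof (induction j)
  case 0 then show ?case by simp
next
  case (Suc j) then show ?case by (cases j) (simp_all add: tri_Suc algebra_simps)
qed

lemma tri_add: "tri (i + j) = tri i + tri j + i * j"
  by (induction j) (simp_all add: tri_Suc)

lemma sum_rev_atMost: fixes f :: "nat \<Rightarrow> 'a::comm_monoid_add"
  shows "(\<Sum>k\<le>m. f k) = (\<Sum>k\<le>m. f (m - k))"
  using sum.atLeastAtMost_rev[of f 0 m] by (simp add: atLeast0AtMost)

lemma tri_swap2: fixes i :: nat and G :: "nat \<Rightarrow> nat \<Rightarrow> 'a::comm_monoid_add"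
  shows "(\<Sum>j\<le>i. \<Sum>l\<le>i-j. G j l) = (\<Sum>t\<le>i. \<Sum>j\<le>t. G j (t-j))"
proof -
  have "(\<Sum>j\<le>i. \<Sum>l\<le>i-j. G j l) = (\<Sum>(j,l)\<in>(SIGMA j:{..i}. {..i-j}). G j l)"
    by (rule sum.Sigma) auto
  also have "(SIGMA j:{..i}. {..i-j}) = {(j,l). j+l \<le> i}" by auto
  also have "(\<Sum>(j,l)\<in>{(j,l). j+l \<le> i}. G j l) = (\<Sum>t\<le>i. \<Sum>j\<le>t. G j (t-j))"
    by (rule sum.triangle_reindex_eq)
  finally show ?thesis .
qed

lemma tri_swap: fixes i :: nat and G :: "nat \<Rightarrow> nat \<Rightarrow> 'a::comm_monoid_add"
  shows "(\<Sum>j\<le>i. \<Sum>l\<le>j. G l j) = (\<Sum>l\<le>i. \<Sum>m\<le>i-l. G l (l+m))"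
proof -
  have "(\<Sum>l\<le>i. \<Sum>m\<le>i-l. G l (l+m)) = (\<Sum>t\<le>i. \<Sum>l\<le>t. G l (l + (t-l)))"
    by (rule tri_swap2)
  also have "\<dots> = (\<Sum>t\<le>i. \<Sum>l\<le>t. G l t)"
    by (intro sum.cong refl) (auto simp: le_add_diff_inverse)
  finally show ?thesis by simp
qed

lemma sum_shift_lb: fixes F :: "nat \<Rightarrow> 'a::comm_monoid_add"
  assumes "t \<le> k" "\<And>i. i < t \<Longrightarrow> F i = 0"
  shows "(\<Sum>i\<le>k. F i) = (\<Sum>m\<le>k-t. F (t+m))"
proof -
  have "{..k} = {..<t} \<union> {t..k}" using assms(1) by auto
  then have "(\<Sum>i\<le>k. F i) = (\<Sum>i<t. F i) + (\<Sum>i\<in>{t..k}. F i)"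
    by (simp add: sum.union_disjoint ivl_disj_int)
  also have "(\<Sum>i<t. F i) = 0" using assms(2) by simp
  also have "(\<Sum>i\<in>{t..k}. F i) = (\<Sum>i\<in>{0+t..(k-t)+t}. F i)" using assms(1) by simp
  also have "\<dots> = (\<Sum>m\<in>{0..k-t}. F (m+t))" by (rule sum.shift_bounds_cl_nat_ivl)
  also have "\<dots> = (\<Sum>m\<le>k-t. F (t+m))" by (simp add: atLeast0AtMost add.commute)
  finally show ?thesis by simp
qed

lemma sum_extend: fixes F :: "nat \<Rightarrow> 'a::comm_monoid_add"
  assumes "i \<le> k" "\<And>t. i < t \<Longrightarrow> F t = 0"
  shows "(\<Sum>t\<le>i. F t) = (\<Sum>t\<le>k. F t)"
  by (rule sum.mono_neutral_left) (use assms in auto)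

locale qctx =
  fixes q :: complex
  assumes Qnz: "qpoch q q n \<noteq> 0" and qnz: "q \<noteq> 0"
begin

lemma qpow_ne1: "0 < m \<Longrightarrow> q^m \<noteq> 1"
proof -
  assume "0 < m"
  then obtain j where "m = Suc j" by (cases m) auto
  moreover have "qpoch q q (Suc j) \<noteq> 0" by (rule Qnz)
  ultimately show ?thesis by (auto simp: qpoch_Suc)
qed

lemma qb_0[simp]: "qb q n 0 = 1"
  using Qnz by (simp add: qb_def)

lemma qb_n[simp]: "qb q n n = 1"
  using Qnz by (simp add: qb_def)

lemma qb_gt[simp]: "n < k \<Longrightarrow> qb q n k = 0"
  by (simp add: qb_def)

lemma qb_Suc_A:
  assumes "k \<le> n"
  shows "qb q (Suc n) (Suc k) = qb q n k + q^(Suc k) * qb q n (Suc k)"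
proof (cases "k = n")
  case True
  then show ?thesis by simp
next
  case False
  then have kn: "Suc k \<le> n" using assms by simp
  have e1: "qpoch q q (Suc n) = qpoch q q n * (1 - q^(Suc n))" by (simp add: qpoch_Suc)
  have e2: "qpoch q q (Suc k) = qpoch q q k * (1 - q^(Suc k))" by (simp add: qpoch_Suc)
  have e3: "qpoch q q (n - k) = qpoch q q (n - Suc k) * (1 - q^(n-k))"
    using kn by (metis Suc_diff_Suc Suc_le_lessD mult.left_commute power_Suc qpoch_Suc)
  have nz1: "qpoch q q (n - Suc k) \<noteq> 0" "qpoch q q k \<noteq> 0" "qpoch q q n \<noteq> 0" using Qnz by auto
  have nz2: "1 - q^(Suc k) \<noteq> 0" using qpow_ne1[of "Suc k"] by auto
  have nz3: "1 - q^(n-k) \<noteq> 0" using qpow_ne1[of "n-k"] kn by auto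
  have "q^(n-k) * q^(Suc k) = q^(Suc n)" using kn by (simp flip: power_add)
  then have key: "1 - q^(Suc n) = (1 - q^(n-k)) + q^(n-k) * (1 - q^(Suc k))"
    by (simp add: algebra_simps)
  have pw: "q^(Suc k) * q^(n-k) = q^(Suc n)" using kn by (simp flip: power_add)
  have h1': "qb q (Suc n) (Suc k) = qpoch q q n * (1 - q^(Suc n)) /
      (qpoch q q k * (1 - q^(Suc k)) * (qpoch q q (n - Suc k) * (1 - q^(n-k))))"
    using assms kn unfolding qb_def
    by (simp only: e1 e2 e3 if_True Suc_le_mono diff_Suc_Suc mult.assoc)
  have h1: "qb q (Suc n) (Suc k) = qpoch q q n * (1 - q^(Suc k) * q^(n-k)) /
      (qpoch q q k * (1 - q^(Suc k)) * (qpoch q q (n - Suc k) * (1 - q^(n-k))))"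
    unfolding h1' pw ..
  have h2: "qb q n k = qpoch q q n / (qpoch q q k * (qpoch q q (n - Suc k) * (1 - q^(n-k))))"
    using assms unfolding qb_def by (simp add: e3)
  have h3: "qb q n (Suc k) = qpoch q q n / (qpoch q q k * (1 - q^(Suc k)) * qpoch q q (n - Suc k))"
    using kn unfolding qb_def by (simp add: e2)
  have aux: "\<And>Qn Qk B x y::complex. Qk \<noteq> 0 \<Longrightarrow> B \<noteq> 0 \<Longrightarrow> 1-x \<noteq> 0 \<Longrightarrow> 1-y \<noteq> 0 \<Longrightarrow>
     Qn*(1-x*y)/(Qk*(1-x)*(B*(1-y))) = Qn/(Qk*(B*(1-y))) + x*(Qn/(Qk*(1-x)*B))"
    by (simp add: divide_simps) (simp add: algebra_simps)
  show ?thesis unfolding h1 h2 h3 by (rule aux) (use nz1 nz2 nz3 in auto)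
qed

lemma qb_Suc_B:
  assumes "k \<le> n"
  shows "qb q (Suc n) (Suc k) = qb q n (Suc k) + q^(n-k) * qb q n k"
proof (cases "k = n")
  case True
  then show ?thesis by simp
next
  case False
  then have kn: "Suc k \<le> n" using assms by simp
  have e1: "qpoch q q (Suc n) = qpoch q q n * (1 - q^(Suc n))" by (simp add: qpoch_Suc)
  have e2: "qpoch q q (Suc k) = qpoch q q k * (1 - q^(Suc k))" by (simp add: qpoch_Suc)
  have e3: "qpoch q q (n - k) = qpoch q q (n - Suc k) * (1 - q^(n-k))"
    using kn by (metis Suc_diff_Suc Suc_le_lessD mult.left_commute power_Suc qpoch_Suc)
  have nz1: "qpoch q q (n - Suc k) \<noteq> 0" "qpoch q q k \<noteq> 0" "qpoch q q n \<noteq> 0" using Qnz by auto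
  have nz2: "1 - q^(Suc k) \<noteq> 0" using qpow_ne1[of "Suc k"] by auto
  have nz3: "1 - q^(n-k) \<noteq> 0" using qpow_ne1[of "n-k"] kn by auto
  have pw: "q^(Suc k) * q^(n-k) = q^(Suc n)" using kn by (simp flip: power_add)
  have h1': "qb q (Suc n) (Suc k) = qpoch q q n * (1 - q^(Suc n)) /
      (qpoch q q k * (1 - q^(Suc k)) * (qpoch q q (n - Suc k) * (1 - q^(n-k))))"
    using assms kn unfolding qb_def
    by (simp only: e1 e2 e3 if_True Suc_le_mono diff_Suc_Suc mult.assoc)
  have h1: "qb q (Suc n) (Suc k) = qpoch q q n * (1 - q^(Suc k) * q^(n-k)) /
      (qpoch q q k * (1 - q^(Suc k)) * (qpoch q q (n - Suc k) * (1 - q^(n-k))))"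
    unfolding h1' pw ..
  have h2: "qb q n k = qpoch q q n / (qpoch q q k * (qpoch q q (n - Suc k) * (1 - q^(n-k))))"
    using assms unfolding qb_def by (simp add: e3)
  have h3: "qb q n (Suc k) = qpoch q q n / (qpoch q q k * (1 - q^(Suc k)) * qpoch q q (n - Suc k))"
    using kn unfolding qb_def by (simp add: e2)
  have aux: "\<And>Qn Qk B x y::complex. Qk \<noteq> 0 \<Longrightarrow> B \<noteq> 0 \<Longrightarrow> 1-x \<noteq> 0 \<Longrightarrow> 1-y \<noteq> 0 \<Longrightarrow>
     Qn*(1-x*y)/(Qk*(1-x)*(B*(1-y))) = Qn/(Qk*(1-x)*B) + y*(Qn/(Qk*(B*(1-y))))"
    by (simp add: divide_simps) (simp add: algebra_simps)
  show ?thesis unfolding h1 h2 h3 by (rule aux) (use nz1 nz2 nz3 in auto)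
qed

lemma pascalA_sum:
  "(\<Sum>m\<le>Suc M. qb q (Suc M) m * F m) = (\<Sum>m\<le>M. qb q M m * (q^m * F m + F (Suc m)))"
proof -
  have a1: "(\<Sum>m\<le>Suc M. qb q (Suc M) m * F m) = F 0 + (\<Sum>m\<le>M. qb q (Suc M) (Suc m) * F (Suc m))"
    by (subst sum.atMost_Suc_shift) simp
  have a2: "(\<Sum>m\<le>M. qb q (Suc M) (Suc m) * F (Suc m))
      = (\<Sum>m\<le>M. qb q M m * F (Suc m)) + (\<Sum>m\<le>M. q^(Suc m) * qb q M (Suc m) * F (Suc m))"
    by (simp add: qb_Suc_A sum.distrib[symmetric] algebra_simps)
  have a3: "(\<Sum>m\<le>M. q^(Suc m) * qb q M (Suc m) * F (Suc m)) = (\<Sum>m<M. q^(Suc m) * qb q M (Suc m) * F (Suc m))"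
    by (simp add: lessThan_Suc_atMost[symmetric])
  have a4: "(\<Sum>m\<le>M. qb q M m * (q^m * F m + F (Suc m))) =
     (\<Sum>m\<le>M. qb q M m * q^m * F m) + (\<Sum>m\<le>M. qb q M m * F (Suc m))"
    by (simp add: sum.distrib[symmetric] algebra_simps)
  have a5: "(\<Sum>m\<le>M. qb q M m * q^m * F m) = F 0 + (\<Sum>m<M. q^(Suc m) * qb q M (Suc m) * F (Suc m))"
    by (simp add: sum.atMost_shift mult_ac)
  show ?thesis unfolding a1 a2 a3 a4 a5 by (simp add: algebra_simps)
qed

lemma pascalB_sum:
  "(\<Sum>m\<le>Suc M. qb q (Suc M) m * F m) = (\<Sum>m\<le>M. qb q M m * (F m + q^(M-m) * F (Suc m)))"
proof -
  have a1: "(\<Sum>m\<le>Suc M. qb q (Suc M) m * F m) = F 0 + (\<Sum>m\<le>M. qb q (Suc M) (Suc m) * F (Suc m))"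
    by (subst sum.atMost_Suc_shift) simp
  have a2: "(\<Sum>m\<le>M. qb q (Suc M) (Suc m) * F (Suc m))
      = (\<Sum>m\<le>M. qb q M (Suc m) * F (Suc m)) + (\<Sum>m\<le>M. q^(M-m) * qb q M m * F (Suc m))"
    by (simp add: qb_Suc_B sum.distrib[symmetric] algebra_simps)
  have a3: "(\<Sum>m\<le>M. qb q M (Suc m) * F (Suc m)) = (\<Sum>m<M. qb q M (Suc m) * F (Suc m))"
    by (simp add: lessThan_Suc_atMost[symmetric])
  have a4: "(\<Sum>m\<le>M. qb q M m * (F m + q^(M-m) * F (Suc m))) =
     (\<Sum>m\<le>M. qb q M m * F m) + (\<Sum>m\<le>M. q^(M-m) * qb q M m * F (Suc m))"
    by (simp add: sum.distrib[symmetric] algebra_simps)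
  have a5: "(\<Sum>m\<le>M. qb q M m * F m) = F 0 + (\<Sum>m<M. qb q M (Suc m) * F (Suc m))"
    by (simp add: sum.atMost_shift mult_ac)
  show ?thesis unfolding a1 a2 a3 a4 a5 by (simp add: algebra_simps)
qed

lemma vdm: "(\<Sum>m\<le>M. qb q M m * qpoch x q m * qpoch y q (M-m) * y^m) = qpoch (x*y) q M"
proof (induction M)
  case 0
  then show ?case by simp
next
  case (Suc M)
  have t: "qpoch x q m * qpoch y q (Suc M - m) * y^m + q^(M-m) * (qpoch x q (Suc m) * qpoch y q (Suc M - Suc m) * y^(Suc m))
      = (1 - x*y*q^M) * (qpoch x q m * qpoch y q (M-m) * y^m)" if "m \<le> M" for m
  proof -
    have "Suc M - m = Suc (M - m)" using that by simp
    moreover have "q^(M-m) * q^m = q^M" using that by (simp flip: power_add)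
    ultimately show ?thesis by (simp add: qpoch_Suc algebra_simps)
  qed
  have "(\<Sum>m\<le>Suc M. qb q (Suc M) m * qpoch x q m * qpoch y q (Suc M-m) * y^m)
      = (\<Sum>m\<le>M. qb q M m * (qpoch x q m * qpoch y q (Suc M - m) * y^m + q^(M-m) * (qpoch x q (Suc m) * qpoch y q (Suc M - Suc m) * y^(Suc m))))"
    using pascalB_sum[of M "\<lambda>m. qpoch x q m * qpoch y q (Suc M - m) * y^m"] by (simp add: mult.assoc)
  also have "\<dots> = (\<Sum>m\<le>M. (1 - x*y*q^M) * (qb q M m * qpoch x q m * qpoch y q (M-m) * y^m))"
  proof (rule sum.cong[OF refl])
    fix m assume "m \<in> {..M}"
    then have "m \<le> M" by simp
    then show "qb q M m * (qpoch x q m * qpoch y q (Suc M - m) * y^m + q^(M-m) * (qpoch x q (Suc m) * qpoch y q (Suc M - Suc m) * y^(Suc m)))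
      = (1 - x*y*q^M) * (qb q M m * qpoch x q m * qpoch y q (M-m) * y^m)"
      by (simp only: t) (simp add: mult_ac)
  qed
  also have "\<dots> = (1 - x*y*q^M) * qpoch (x*y) q M"
    by (simp add: sum_distrib_left[symmetric] Suc.IH)
  finally show ?case by (simp add: qpoch_Suc mult_ac)
qed

lemma cv2p: "(\<Sum>l\<le>j. qb q j l * (-p)^l * q^(tri l) * qpoch b q l * qpoch (p*b*q^l) q (j-l)) = qpoch p q j"
proof (induction j arbitrary: p)
  case 0
  then show ?case by simp
next
  case (Suc j)
  have t: "q^l * ((-p)^l * q^(tri l) * qpoch b q l * qpoch (p*b*q^l) q (Suc j - l))
      + (-p)^(Suc l) * q^(tri (Suc l)) * qpoch b q (Suc l) * qpoch (p*b*q^(Suc l)) q (Suc j - Suc l)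
      = (1 - p) * ((-(p*q))^l * q^(tri l) * qpoch b q l * qpoch (p*q*b*q^l) q (j-l))" if "l \<le> j" for l
  proof -
    have e0: "Suc j - l = Suc (j - l)" "Suc j - Suc l = j - l" using that by simp_all
    have e3: "p*q*b*q^l = p*b*q^(Suc l)" by (simp add: mult_ac)
    have e1: "qpoch b q (Suc l) = qpoch b q l * (1 - b*q^l)" by (rule qpoch_Suc)
    have e2: "qpoch (p*b*q^l) q (Suc (j-l)) = (1 - p*b*q^l) * qpoch (p*b*q^(Suc l)) q (j-l)"
      by (simp add: qpoch_Suc_left mult_ac)
    have e4: "(-(p*q))^l = (-p)^l * q^l" by (simp add: power_mult_distrib[symmetric])
    have e5: "(-p)^(Suc l) = (-p)^l * (-p)" by simp
    have e6: "q^(tri (Suc l)) = q^(tri l) * q^l" by (simp add: tri_Suc power_add)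
    show ?thesis unfolding e0 e1 e2 e3 e4 e5 e6 by (simp add: algebra_simps)
  qed
  have "(\<Sum>l\<le>Suc j. qb q (Suc j) l * (-p)^l * q^(tri l) * qpoch b q l * qpoch (p*b*q^l) q (Suc j-l))
      = (\<Sum>l\<le>j. qb q j l * (q^l * ((-p)^l * q^(tri l) * qpoch b q l * qpoch (p*b*q^l) q (Suc j - l))
      + (-p)^(Suc l) * q^(tri (Suc l)) * qpoch b q (Suc l) * qpoch (p*b*q^(Suc l)) q (Suc j - Suc l)))"
    using pascalA_sum[of j "\<lambda>l. (-p)^l * q^(tri l) * qpoch b q l * qpoch (p*b*q^l) q (Suc j-l)"]
    by (simp add: mult.assoc)
  also have "\<dots> = (\<Sum>l\<le>j. (1 - p) * (qb q j l * (-(p*q))^l * q^(tri l) * qpoch b q l * qpoch (p*q*b*q^l) q (j-l)))"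
  proof (rule sum.cong[OF refl])
    fix l assume "l \<in> {..j}"
    then have "l \<le> j" by simp
    then show "qb q j l * (q^l * ((-p)^l * q^(tri l) * qpoch b q l * qpoch (p*b*q^l) q (Suc j - l))
      + (-p)^(Suc l) * q^(tri (Suc l)) * qpoch b q (Suc l) * qpoch (p*b*q^(Suc l)) q (Suc j - Suc l))
      = (1 - p) * (qb q j l * (-(p*q))^l * q^(tri l) * qpoch b q l * qpoch (p*q*b*q^l) q (j-l))"
      by (simp only: t) (simp add: mult_ac)
  qed
  also have "\<dots> = (1 - p) * qpoch (p*q) q j"
    by (simp add: sum_distrib_left[symmetric] Suc.IH)
  finally show ?case by (simp add: qpoch_Suc_left)
qed

lemma qb_sym: "k \<le> n \<Longrightarrow> qb q n (n-k) = qb q n k"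
  by (simp add: qb_def mult.commute)

lemma qb_mult: "j \<le> k \<Longrightarrow> k \<le> n \<Longrightarrow> qb q n k * qb q k j = qb q n j * qb q (n-j) (k-j)"
  using Qnz by (simp add: qb_def divide_simps)

lemma saal: "(\<Sum>k\<le>n. qb q n k * qpoch a q k * qpoch b q k * qpoch (a*b*y*q^k) q (n-k) * qpoch y q (n-k) * y^k)
   = qpoch (a*y) q n * qpoch (b*y) q n"
proof -
  have e1: "qpoch (a*b*y*q^k) q (n-k) = (\<Sum>l\<le>n-k. qb q (n-k) l * qpoch (a*q^k) q l * qpoch (b*y) q (n-k-l) * (b*y)^l)" for k
    using vdm[of "n-k" "a*q^k" "b*y"] by (simp add: mult_ac)
  have "(\<Sum>k\<le>n. qb q n k * qpoch a q k * qpoch b q k * qpoch (a*b*y*q^k) q (n-k) * qpoch y q (n-k) * y^k)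
     = (\<Sum>k\<le>n. \<Sum>l\<le>n-k. qb q n k * qpoch a q k * qpoch b q k * qpoch y q (n-k) * y^k *
          (qb q (n-k) l * qpoch (a*q^k) q l * qpoch (b*y) q (n-k-l) * (b*y)^l))"
    unfolding e1 by (simp add: sum_distrib_left sum_distrib_right mult_ac)
  also have "\<dots> = (\<Sum>m\<le>n. \<Sum>k\<le>m. qb q n k * qpoch a q k * qpoch b q k * qpoch y q (n-k) * y^k *
          (qb q (n-k) (m-k) * qpoch (a*q^k) q (m-k) * qpoch (b*y) q (n-k-(m-k)) * (b*y)^(m-k)))"
    by (rule tri_swap2)
  also have "\<dots> = (\<Sum>m\<le>n. qb q n m * qpoch a q m * qpoch (b*y) q (n-m) * qpoch y q (n-m) * y^m *
          (\<Sum>k\<le>m. qb q m k * qpoch b q k * qpoch (y*q^(n-m)) q (m-k) * b^(m-k)))"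
  proof (rule sum.cong[OF refl])
    fix m assume "m \<in> {..n}"
    then have mn: "m \<le> n" by simp
    show "(\<Sum>k\<le>m. qb q n k * qpoch a q k * qpoch b q k * qpoch y q (n-k) * y^k *
          (qb q (n-k) (m-k) * qpoch (a*q^k) q (m-k) * qpoch (b*y) q (n-k-(m-k)) * (b*y)^(m-k)))
      = qb q n m * qpoch a q m * qpoch (b*y) q (n-m) * qpoch y q (n-m) * y^m *
          (\<Sum>k\<le>m. qb q m k * qpoch b q k * qpoch (y*q^(n-m)) q (m-k) * b^(m-k))"
      unfolding sum_distrib_left
    proof (rule sum.cong[OF refl])
      fix k assume "k \<in> {..m}"
      then have km: "k \<le> m" by simp
      have f1: "qb q n k * qb q (n-k) (m-k) = qb q n m * qb q m k"
        using qb_mult[of k m n] km mn by (simp add: mult.commute)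
      have f2: "qpoch a q k * qpoch (a*q^k) q (m-k) = qpoch a q m"
        using qpoch_diff[of k m a q] km by simp
      have f3: "qpoch y q (n-k) = qpoch y q (n-m) * qpoch (y*q^(n-m)) q (m-k)"
        using qpoch_diff[of "n-m" "n-k" y q] km mn by (simp add: diff_diff_right)
      have f4: "n-k-(m-k) = n-m" using km mn by simp
      have f5: "y^k * (b*y)^(m-k) = y^m * b^(m-k)"
        using km by (simp add: power_mult_distrib mult_ac flip: power_add)
      show "qb q n k * qpoch a q k * qpoch b q k * qpoch y q (n-k) * y^k *
          (qb q (n-k) (m-k) * qpoch (a*q^k) q (m-k) * qpoch (b*y) q (n-k-(m-k)) * (b*y)^(m-k))
        = qb q n m * qpoch a q m * qpoch (b*y) q (n-m) * qpoch y q (n-m) * y^m *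
          (qb q m k * qpoch b q k * qpoch (y*q^(n-m)) q (m-k) * b^(m-k))"
      proof -
        have "qb q n k * qpoch a q k * qpoch b q k * qpoch y q (n-k) * y^k *
          (qb q (n-k) (m-k) * qpoch (a*q^k) q (m-k) * qpoch (b*y) q (n-k-(m-k)) * (b*y)^(m-k))
          = (qb q n k * qb q (n-k) (m-k)) * (qpoch a q k * qpoch (a*q^k) q (m-k)) * qpoch b q k
             * qpoch y q (n-k) * (y^k * (b*y)^(m-k)) * qpoch (b*y) q (n-k-(m-k))"
          by (simp add: mult_ac)
        also have "\<dots> = qb q n m * qb q m k * qpoch a q m * qpoch b q k
             * (qpoch y q (n-m) * qpoch (y*q^(n-m)) q (m-k)) * (y^m * b^(m-k)) * qpoch (b*y) q (n-m)"
          unfolding f1 f2 f3 f4 f5 by simp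
        finally show ?thesis by (simp add: mult_ac)
      qed
    qed
  qed
  also have "\<dots> = (\<Sum>m\<le>n. qb q n m * qpoch a q m * qpoch y q (n-m) * y^m * qpoch (b*y) q n)"
  proof (rule sum.cong[OF refl])
    fix m assume "m \<in> {..n}"
    then have mn: "m \<le> n" by simp
    have g1: "(\<Sum>k\<le>m. qb q m k * qpoch b q k * qpoch (y*q^(n-m)) q (m-k) * b^(m-k))
        = (\<Sum>k\<le>m. qb q m k * qpoch (y*q^(n-m)) q k * qpoch b q (m-k) * b^k)"
      by (subst sum_rev_atMost) (intro sum.cong refl, auto simp: qb_sym)
    have g2: "(\<Sum>k\<le>m. qb q m k * qpoch (y*q^(n-m)) q k * qpoch b q (m-k) * b^k) = qpoch (b*y*q^(n-m)) q m"
      using vdm[of m "y*q^(n-m)" b] by (simp add: mult_ac)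
    have g3: "qpoch (b*y) q (n-m) * qpoch (b*y*q^(n-m)) q m = qpoch (b*y) q n"
      using qpoch_add[of "b*y" q "n-m" m] mn by simp
    show "qb q n m * qpoch a q m * qpoch (b*y) q (n-m) * qpoch y q (n-m) * y^m *
          (\<Sum>k\<le>m. qb q m k * qpoch b q k * qpoch (y*q^(n-m)) q (m-k) * b^(m-k))
        = qb q n m * qpoch a q m * qpoch y q (n-m) * y^m * qpoch (b*y) q n"
      unfolding g1 g2 g3[symmetric] by (simp add: mult_ac)
  qed
  also have "\<dots> = qpoch (a*y) q n * qpoch (b*y) q n"
    using vdm[of n a y] by (simp add: sum_distrib_right[symmetric])
  finally show ?thesis .
qed

lemma t313:
  "(\<Sum>j\<le>i. qb q i j * (-1)^j * q^(tri j) * qpoch b q j * qpoch c q j * (p*r)^j * qpoch (p*b*q^j) q (i-j) * qpoch (r*c*q^j) q (i-j))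
 = (\<Sum>j\<le>i. qb q i j * qpoch c q j * qpoch p q j * r^j * qpoch (p*b*q^j) q (i-j) * qpoch r q (i-j))"
proof -
  have "(\<Sum>j\<le>i. qb q i j * qpoch c q j * qpoch p q j * r^j * qpoch (p*b*q^j) q (i-j) * qpoch r q (i-j))
    = (\<Sum>j\<le>i. \<Sum>l\<le>j. qb q i j * qpoch c q j * r^j * qpoch (p*b*q^j) q (i-j) * qpoch r q (i-j) *
         (qb q j l * (-p)^l * q^(tri l) * qpoch b q l * qpoch (p*b*q^l) q (j-l)))"
  proof -
    have e: "qpoch p q j = (\<Sum>l\<le>j. qb q j l * (-p)^l * q^(tri l) * qpoch b q l * qpoch (p*b*q^l) q (j-l))" for j
      by (rule cv2p[symmetric])
    show ?thesis by (simp only: e) (simp add: sum_distrib_left sum_distrib_right mult_ac)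
  qed
  also have "\<dots> = (\<Sum>l\<le>i. \<Sum>m\<le>i-l. qb q i (l+m) * qpoch c q (l+m) * r^(l+m) * qpoch (p*b*q^(l+m)) q (i-(l+m)) * qpoch r q (i-(l+m)) *
         (qb q (l+m) l * (-p)^l * q^(tri l) * qpoch b q l * qpoch (p*b*q^l) q ((l+m)-l)))"
    by (rule tri_swap)
  also have "\<dots> = (\<Sum>l\<le>i. qb q i l * (-p)^l * q^(tri l) * qpoch b q l * qpoch c q l * r^l * qpoch (p*b*q^l) q (i-l) *
         (\<Sum>m\<le>i-l. qb q (i-l) m * qpoch (c*q^l) q m * qpoch r q (i-l-m) * r^m))"
  proof (rule sum.cong[OF refl])
    fix l assume "l \<in> {..i}"
    then have li: "l \<le> i" by simp
    show "(\<Sum>m\<le>i-l. qb q i (l+m) * qpoch c q (l+m) * r^(l+m) * qpoch (p*b*q^(l+m)) q (i-(l+m)) * qpoch r q (i-(l+m)) *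
         (qb q (l+m) l * (-p)^l * q^(tri l) * qpoch b q l * qpoch (p*b*q^l) q ((l+m)-l)))
      = qb q i l * (-p)^l * q^(tri l) * qpoch b q l * qpoch c q l * r^l * qpoch (p*b*q^l) q (i-l) *
         (\<Sum>m\<le>i-l. qb q (i-l) m * qpoch (c*q^l) q m * qpoch r q (i-l-m) * r^m)"
      unfolding sum_distrib_left
    proof (rule sum.cong[OF refl])
      fix m assume "m \<in> {..i-l}"
      then have mi: "m \<le> i - l" by simp
      have f1: "qb q i (l+m) * qb q (l+m) l = qb q i l * qb q (i-l) m"
        using qb_mult[of l "l+m" i] mi li by simp
      have f2: "qpoch c q (l+m) = qpoch c q l * qpoch (c*q^l) q m" by (rule qpoch_add)
      have f3: "qpoch (p*b*q^l) q m * qpoch (p*b*q^(l+m)) q (i-(l+m)) = qpoch (p*b*q^l) q (i-l)"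
        using qpoch_add[of "p*b*q^l" q m "i-(l+m)"] mi li by (simp add: power_add mult_ac)
      have f4: "i-(l+m) = i-l-m" "(l+m)-l = m" by simp_all
      have f5: "r^(l+m) = r^l * r^m" by (simp add: power_add)
      show "qb q i (l+m) * qpoch c q (l+m) * r^(l+m) * qpoch (p*b*q^(l+m)) q (i-(l+m)) * qpoch r q (i-(l+m)) *
         (qb q (l+m) l * (-p)^l * q^(tri l) * qpoch b q l * qpoch (p*b*q^l) q ((l+m)-l))
        = qb q i l * (-p)^l * q^(tri l) * qpoch b q l * qpoch c q l * r^l * qpoch (p*b*q^l) q (i-l) *
         (qb q (i-l) m * qpoch (c*q^l) q m * qpoch r q (i-l-m) * r^m)"
      proof -
        have "qb q i (l+m) * qpoch c q (l+m) * r^(l+m) * qpoch (p*b*q^(l+m)) q (i-(l+m)) * qpoch r q (i-(l+m)) *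
         (qb q (l+m) l * (-p)^l * q^(tri l) * qpoch b q l * qpoch (p*b*q^l) q ((l+m)-l))
          = (qb q i (l+m) * qb q (l+m) l) * qpoch c q (l+m) * r^(l+m) *
             (qpoch (p*b*q^l) q m * qpoch (p*b*q^(l+m)) q (i-(l+m))) * qpoch r q (i-l-m) *
             (-p)^l * q^(tri l) * qpoch b q l"
          unfolding f4 by (simp add: mult_ac)
        also have "\<dots> = qb q i l * qb q (i-l) m * (qpoch c q l * qpoch (c*q^l) q m) * (r^l * r^m) *
             qpoch (p*b*q^l) q (i-l) * qpoch r q (i-l-m) * (-p)^l * q^(tri l) * qpoch b q l"
          unfolding f1 f2 f3 f5 by simp
        finally show ?thesis by (simp add: mult_ac)
      qed
    qed
  qed
  also have "\<dots> = (\<Sum>l\<le>i. qb q i l * (-1)^l * q^(tri l) * qpoch b q l * qpoch c q l * (p*r)^l * qpoch (p*b*q^l) q (i-l) * qpoch (r*c*q^l) q (i-l))"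
  proof (rule sum.cong[OF refl])
    fix l assume "l \<in> {..i}"
    have g: "(\<Sum>m\<le>i-l. qb q (i-l) m * qpoch (c*q^l) q m * qpoch r q (i-l-m) * r^m) = qpoch (r*c*q^l) q (i-l)"
      using vdm[of "i-l" "c*q^l" r] by (simp add: mult_ac)
    have h: "(-p)^l * r^l = (-1)^l * (p*r)^l" by (simp add: power_mult_distrib[symmetric])
    show "qb q i l * (-p)^l * q^(tri l) * qpoch b q l * qpoch c q l * r^l * qpoch (p*b*q^l) q (i-l) *
         (\<Sum>m\<le>i-l. qb q (i-l) m * qpoch (c*q^l) q m * qpoch r q (i-l-m) * r^m)
      = qb q i l * (-1)^l * q^(tri l) * qpoch b q l * qpoch c q l * (p*r)^l * qpoch (p*b*q^l) q (i-l) * qpoch (r*c*q^l) q (i-l)"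
      unfolding g using h by (simp add: mult_ac)
  qed
  finally show ?thesis by simp
qed

lemma ge: assumes xy: "x*y = r"
  shows "(\<Sum>j\<le>i. qb q i j * (-1)^j * q^(tri j) * qpoch b q j * qpoch c q j * (p*r)^j * qpoch (p*b*q^j) q (i-j) * qpoch (r*c*q^j) q (i-j))
  = (\<Sum>t\<le>i. qb q i t * qpoch (p*b*q^t) q (i-t) * qpoch y q (i-t) *
       (\<Sum>j\<le>t. qb q t j * qpoch c q j * qpoch p q j * r^j * qpoch x q (t-j) * y^(t-j) * qpoch (p*b*q^j) q (t-j)))"
proof -
  have e: "qpoch r q (i-j) = (\<Sum>l\<le>i-j. qb q (i-j) l * qpoch x q l * qpoch y q (i-j-l) * y^l)" for j
    using vdm[of "i-j" x y] xy by simp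
  have "(\<Sum>j\<le>i. qb q i j * (-1)^j * q^(tri j) * qpoch b q j * qpoch c q j * (p*r)^j * qpoch (p*b*q^j) q (i-j) * qpoch (r*c*q^j) q (i-j))
     = (\<Sum>j\<le>i. qb q i j * qpoch c q j * qpoch p q j * r^j * qpoch (p*b*q^j) q (i-j) * qpoch r q (i-j))"
    by (rule t313)
  also have "\<dots> = (\<Sum>j\<le>i. \<Sum>l\<le>i-j. qb q i j * qpoch c q j * qpoch p q j * r^j * qpoch (p*b*q^j) q (i-j) *
      (qb q (i-j) l * qpoch x q l * qpoch y q (i-j-l) * y^l))"
    by (simp only: e sum_distrib_left)
  also have "\<dots> = (\<Sum>t\<le>i. \<Sum>j\<le>t. qb q i j * qpoch c q j * qpoch p q j * r^j * qpoch (p*b*q^j) q (i-j) *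
      (qb q (i-j) (t-j) * qpoch x q (t-j) * qpoch y q (i-j-(t-j)) * y^(t-j)))"
    by (rule tri_swap2)
  also have "\<dots> = (\<Sum>t\<le>i. qb q i t * qpoch (p*b*q^t) q (i-t) * qpoch y q (i-t) *
       (\<Sum>j\<le>t. qb q t j * qpoch c q j * qpoch p q j * r^j * qpoch x q (t-j) * y^(t-j) * qpoch (p*b*q^j) q (t-j)))"
  proof (rule sum.cong[OF refl])
    fix t assume "t \<in> {..i}"
    then have ti: "t \<le> i" by simp
    show "(\<Sum>j\<le>t. qb q i j * qpoch c q j * qpoch p q j * r^j * qpoch (p*b*q^j) q (i-j) *
      (qb q (i-j) (t-j) * qpoch x q (t-j) * qpoch y q (i-j-(t-j)) * y^(t-j)))
      = qb q i t * qpoch (p*b*q^t) q (i-t) * qpoch y q (i-t) *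
       (\<Sum>j\<le>t. qb q t j * qpoch c q j * qpoch p q j * r^j * qpoch x q (t-j) * y^(t-j) * qpoch (p*b*q^j) q (t-j))"
      unfolding sum_distrib_left
    proof (rule sum.cong[OF refl])
      fix j assume "j \<in> {..t}"
      then have jt: "j \<le> t" by simp
      have f1: "qb q i j * qb q (i-j) (t-j) = qb q i t * qb q t j"
        using qb_mult[of j t i] jt ti by simp
      have f2: "qpoch (p*b*q^j) q (i-j) = qpoch (p*b*q^j) q (t-j) * qpoch (p*b*q^t) q (i-t)"
        using qpoch_add[of "p*b*q^j" q "t-j" "i-t"] jt ti by (simp add: mult.assoc flip: power_add)
      have f3: "i-j-(t-j) = i-t" using jt ti by simp
      show "qb q i j * qpoch c q j * qpoch p q j * r^j * qpoch (p*b*q^j) q (i-j) *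
      (qb q (i-j) (t-j) * qpoch x q (t-j) * qpoch y q (i-j-(t-j)) * y^(t-j))
        = qb q i t * qpoch (p*b*q^t) q (i-t) * qpoch y q (i-t) *
          (qb q t j * qpoch c q j * qpoch p q j * r^j * qpoch x q (t-j) * y^(t-j) * qpoch (p*b*q^j) q (t-j))"
      proof -
        have "qb q i j * qpoch c q j * qpoch p q j * r^j * qpoch (p*b*q^j) q (i-j) *
          (qb q (i-j) (t-j) * qpoch x q (t-j) * qpoch y q (i-j-(t-j)) * y^(t-j))
          = (qb q i j * qb q (i-j) (t-j)) * qpoch c q j * qpoch p q j * r^j * qpoch (p*b*q^j) q (i-j) *
            qpoch x q (t-j) * qpoch y q (i-t) * y^(t-j)"
          unfolding f3 by (simp add: mult_ac)
        also have "\<dots> = qb q i t * qb q t j * qpoch c q j * qpoch p q j * r^j * (qpoch (p*b*q^j) q (t-j) * qpoch (p*b*q^t) q (i-t)) *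
            qpoch x q (t-j) * qpoch y q (i-t) * y^(t-j)"
          unfolding f1 f2 by simp
        finally show ?thesis by (simp add: mult_ac)
      qed
    qed
  qed
  finally show ?thesis .
qed


lemma rf2: assumes "m \<le> N" "y \<noteq> 0"
  shows "qpoch y q N * (-1)^m * q^(tri m + m) = qpoch (q/(y*q^N)) q m * qpoch y q (N-m) * y^m * q^(N*m)"
  using assms(1)
proof (induction m)
  case 0
  then show ?case by simp
next
  case (Suc m)
  then have mN: "m < N" by simp
  have e1: "N - m = Suc (N - Suc m)" using mN by simp
  have e2: "q^(N - Suc m) * q^(Suc m) = q^N" using mN by (simp only: power_add[symmetric]) simp
  have ih: "qpoch y q N * (-1)^m * q^(tri m + m) = qpoch (q/(y*q^N)) q m * qpoch y q (N-m) * y^m * q^(N*m)"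
    using Suc by simp
  have "qpoch (q/(y*q^N)) q (Suc m) * qpoch y q (N - Suc m) * y^(Suc m) * q^(N * Suc m)
      = qpoch (q/(y*q^N)) q m * qpoch y q (N - Suc m) * y^m * q^(N*m) * ((1 - q/(y*q^N)*q^m) * y * q^N)"
    by (simp add: qpoch_Suc power_add mult_ac)
  also have "(1 - q/(y*q^N)*q^m) * y * q^N = y * q^N - q^(Suc m)"
    using assms(2) qnz by (simp add: field_simps)
  also have "y * q^N - q^(Suc m) = (-(q^(Suc m))) * (1 - y * q^(N - Suc m))"
    using e2 by (simp add: algebra_simps)
  finally have "qpoch (q/(y*q^N)) q (Suc m) * qpoch y q (N - Suc m) * y^(Suc m) * q^(N * Suc m)
      = (-(q^(Suc m))) * (qpoch (q/(y*q^N)) q m * qpoch y q (N - m) * y^m * q^(N*m))"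
    unfolding e1 by (simp add: qpoch_Suc mult_ac)
  also have "\<dots> = (-(q^(Suc m))) * (qpoch y q N * (-1)^m * q^(tri m + m))"
    by (simp only: ih)
  also have "\<dots> = qpoch y q N * (-1)^(Suc m) * q^(tri (Suc m) + Suc m)"
    by (simp add: tri_Suc power_add mult_ac)
  finally show ?case by simp
qed

lemma r1: assumes "m \<le> N"
  shows "qpoch (1/q^N) q m = qb q N m * qpoch q q m * (-1)^m * q^(tri m) / q^(N*m)"
proof -
  have "qpoch q q N * (-1)^m * q^(tri m + m) = qpoch (q/(q*q^N)) q m * qpoch q q (N-m) * q^m * q^(N*m)"
    using rf2[OF assms, of q] qnz by simp
  moreover have "q/(q*q^N) = 1/q^N" using qnz by simp
  ultimately have "qpoch q q N * (-1)^m * q^(tri m) * q^m = qpoch (1/q^N) q m * qpoch q q (N-m) * q^(N*m) * q^m"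
    by (simp add: power_add mult_ac)
  then have "qpoch q q N * (-1)^m * q^(tri m) = qpoch (1/q^N) q m * qpoch q q (N-m) * q^(N*m)"
    using qnz by simp
  then show ?thesis
    using assms Qnz[of "N-m"] Qnz[of m] qnz unfolding qb_def by (simp add: field_simps)
qed

lemma r1_gt: "N < m \<Longrightarrow> qpoch (1/q^N) q m = 0"
  unfolding qpoch_def using qnz by (intro prod_zero) (auto intro!: bexI[of _ N])

lemma saal3: assumes y0: "y \<noteq> 0" and nzC: "qpoch (A*B*y) q N \<noteq> 0" and nzy: "qpoch y q N \<noteq> 0"
  shows "(\<Sum>m\<le>N. qpoch (1/q^N) q m * qpoch A q m * qpoch B q m * q^m /
            (qpoch q q m * qpoch (A*B*y) q m * qpoch (q/(y*q^N)) q m))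
       = qpoch (A*y) q N * qpoch (B*y) q N / (qpoch (A*B*y) q N * qpoch y q N)"
proof -
  have key: "qpoch (1/q^N) q m * qpoch A q m * qpoch B q m * q^m /
            (qpoch q q m * qpoch (A*B*y) q m * qpoch (q/(y*q^N)) q m) * (qpoch (A*B*y) q N * qpoch y q N)
        = qb q N m * qpoch A q m * qpoch B q m * qpoch (A*B*y*q^m) q (N-m) * qpoch y q (N-m) * y^m"
    if mN: "m \<le> N" for m
  proof -
    have h1: "qpoch (1/q^N) q m = qb q N m * qpoch q q m * (-1)^m * q^(tri m) / q^(N*m)"
      using r1[OF mN] .
    have h2: "qpoch (A*B*y) q N = qpoch (A*B*y) q m * qpoch (A*B*y*q^m) q (N-m)"
      using qpoch_diff[OF mN] .
    have h3: "qpoch y q N * (-1)^m * q^(tri m + m) = qpoch (q/(y*q^N)) q m * qpoch y q (N-m) * y^m * q^(N*m)"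
      using rf2[OF mN y0] .
    have nz3: "(-1::complex)^m * q^(tri m + m) \<noteq> 0" using qnz by simp
    have h3': "qpoch y q N = qpoch (q/(y*q^N)) q m * qpoch y q (N-m) * y^m * q^(N*m) / ((-1)^m * q^(tri m + m))"
      using h3 nz3 by (simp add: field_simps)
    have nzD: "qpoch (q/(y*q^N)) q m \<noteq> 0" using h3 nzy qnz by auto
    have nzCm: "qpoch (A*B*y) q m \<noteq> 0" using h2 nzC by auto
    have nzQ: "qpoch q q m \<noteq> 0" by (rule Qnz)
    show ?thesis unfolding h1 h2 h3'
      using nzD nzCm nzQ qnz by (simp add: field_simps power_add)
  qed
  have "(\<Sum>m\<le>N. qpoch (1/q^N) q m * qpoch A q m * qpoch B q m * q^m /
            (qpoch q q m * qpoch (A*B*y) q m * qpoch (q/(y*q^N)) q m)) * (qpoch (A*B*y) q N * qpoch y q N)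
     = (\<Sum>m\<le>N. qb q N m * qpoch A q m * qpoch B q m * qpoch (A*B*y*q^m) q (N-m) * qpoch y q (N-m) * y^m)"
    unfolding sum_distrib_right by (intro sum.cong refl) (rule key; simp)
  also have "\<dots> = qpoch (A*y) q N * qpoch (B*y) q N" by (rule saal)
  finally show ?thesis using nzC nzy by (simp add: field_simps)
qed

lemma rfull: assumes "z \<noteq> 0"
  shows "qpoch z q N * (-1)^N * q^(tri N + N) = qpoch (q/(z*q^N)) q N * z^N * q^(N*N)"
  using rf2[of N N z] assms by simp

lemma kernel:
  assumes iN: "i \<le> n" and al: "\<alpha> \<noteq> 0" and a0: "a \<noteq> 0" and b0: "b \<noteq> 0"
    and cdef: "c = \<alpha>*a*b/q"
    and nqa: "qpoch (q/a) q n \<noteq> 0" and nqb: "qpoch (q/b) q n \<noteq> 0"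
    and naa: "qpoch (\<alpha>*a) q n \<noteq> 0" and nab: "qpoch (\<alpha>*b) q n \<noteq> 0"
  shows "qpoch (q/a) q n * qpoch (q/b) q n / (qpoch (\<alpha>*a) q n * qpoch (\<alpha>*b) q n) * c^n * (1/c)^i *
     (\<Sum>m\<le>n-i. qpoch (1/q^n) q (i+m) * qpoch (\<alpha>*q^n) q (i+m) * q^(i+m) /
         (qpoch q q (i+m) * qpoch (q/a) q (i+m) * qpoch (q/b) q (i+m)) * qb q (i+m) i * qpoch (1/c) q m)
   = qpoch (1/q^n) q i * qpoch (\<alpha>*q^n) q i * q^i / (qpoch q q i * qpoch (\<alpha>*a) q i * qpoch (\<alpha>*b) q i)"
proof -
  define N where "N = n - i"
  have nN: "n = i + N" using iN N_def by simp
  have c0: "c \<noteq> 0" using cdef al a0 b0 qnz by simp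
  define A where "A = \<alpha>*q^n*q^i"
  define B where "B = 1/c"
  define y where "y = b/q^n"
  have y0: "y \<noteq> 0" using b0 qnz y_def by simp
  have eC: "q/a*q^i = A*B*y" unfolding A_def B_def y_def cdef using al a0 b0 qnz by (simp add: field_simps)
  have eD: "q/b*q^i = q/(y*q^N)" unfolding y_def using b0 qnz nN by (simp add: field_simps power_add)
  have eN: "1/q^n*q^i = 1/q^N" using qnz nN by (simp add: field_simps power_add)
  have pa: "qpoch (q/a) q n = qpoch (q/a) q i * qpoch (A*B*y) q N"
    using qpoch_add[of "q/a" q i N] nN eC by simp
  have pb: "qpoch (q/b) q n = qpoch (q/b) q i * qpoch (q/(y*q^N)) q N"
    using qpoch_add[of "q/b" q i N] nN eD by simp
  have paa: "qpoch (\<alpha>*a) q n = qpoch (\<alpha>*a) q i * qpoch (\<alpha>*a*q^i) q N"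
    using qpoch_add[of "\<alpha>*a" q i N] nN by simp
  have pab: "qpoch (\<alpha>*b) q n = qpoch (\<alpha>*b) q i * qpoch (\<alpha>*b*q^i) q N"
    using qpoch_add[of "\<alpha>*b" q i N] nN by simp
  have nz_ai: "qpoch (q/a) q i \<noteq> 0" "qpoch (A*B*y) q N \<noteq> 0" using nqa pa by auto
  have nz_bi: "qpoch (q/b) q i \<noteq> 0" "qpoch (q/(y*q^N)) q N \<noteq> 0" using nqb pb by auto
  have nz_aa: "qpoch (\<alpha>*a) q i \<noteq> 0" "qpoch (\<alpha>*a*q^i) q N \<noteq> 0" using naa paa by auto
  have nz_ab: "qpoch (\<alpha>*b) q i \<noteq> 0" "qpoch (\<alpha>*b*q^i) q N \<noteq> 0" using nab pab by auto
  have r_y: "qpoch y q N * (-1)^N * q^(tri N + N) = qpoch (q/(y*q^N)) q N * y^N * q^(N*N)"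
    by (rule rfull[OF y0])
  have ny: "qpoch y q N \<noteq> 0" using r_y nz_bi y0 qnz by auto
  have z1: "\<alpha>*a*q^i \<noteq> 0" using al a0 qnz by simp
  have r_a: "qpoch (\<alpha>*a*q^i) q N * (-1)^N * q^(tri N + N) = qpoch (q/(\<alpha>*a*q^i*q^N)) q N * (\<alpha>*a*q^i)^N * q^(N*N)"
    by (rule rfull[OF z1])
  have eBy: "B*y = q/(\<alpha>*a*q^i*q^N)" unfolding B_def y_def cdef using al a0 b0 qnz nN
    by (simp add: field_simps power_add)
  have eAy: "A*y = \<alpha>*b*q^i" unfolding A_def y_def using qnz by (simp add: field_simps)
  define Lam where "Lam = qpoch (1/q^n) q i * qpoch (\<alpha>*q^n) q i * q^i / (qpoch q q i * qpoch (q/a) q i * qpoch (q/b) q i)"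
  have trm: "qpoch (1/q^n) q (i+m) * qpoch (\<alpha>*q^n) q (i+m) * q^(i+m) /
         (qpoch q q (i+m) * qpoch (q/a) q (i+m) * qpoch (q/b) q (i+m)) * qb q (i+m) i * qpoch (1/c) q m
       = Lam * (qpoch (1/q^N) q m * qpoch A q m * qpoch B q m * q^m /
            (qpoch q q m * qpoch (A*B*y) q m * qpoch (q/(y*q^N)) q m))"
    if mN: "m \<le> N" for m
  proof -
    have F1: "qpoch (1/q^n) q (i+m) = qpoch (1/q^n) q i * qpoch (1/q^N) q m"
      using qpoch_add[of "1/q^n" q i m] eN by simp
    have F2: "qpoch (\<alpha>*q^n) q (i+m) = qpoch (\<alpha>*q^n) q i * qpoch A q m"
      using qpoch_add[of "\<alpha>*q^n" q i m] A_def by simp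
    have F3: "qpoch (q/a) q (i+m) = qpoch (q/a) q i * qpoch (A*B*y) q m"
      using qpoch_add[of "q/a" q i m] eC by simp
    have F4: "qpoch (q/b) q (i+m) = qpoch (q/b) q i * qpoch (q/(y*q^N)) q m"
      using qpoch_add[of "q/b" q i m] eD by simp
    have F5: "qb q (i+m) i = qpoch q q (i+m) / (qpoch q q i * qpoch q q m)"
      unfolding qb_def by simp
    have nzm1: "qpoch (A*B*y) q m \<noteq> 0" using nz_ai(2) qpoch_diff[OF mN, of "A*B*y" q] by auto
    have nzm2: "qpoch (q/(y*q^N)) q m \<noteq> 0" using nz_bi(2) qpoch_diff[OF mN, of "q/(y*q^N)" q] by auto
    have nzQ: "qpoch q q (i+m) \<noteq> 0" "qpoch q q i \<noteq> 0" "qpoch q q m \<noteq> 0" by (rule Qnz)+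
    show ?thesis unfolding F1 F2 F3 F4 F5 Lam_def B_def
      using nzm1 nzm2 nzQ nz_ai(1) nz_bi(1) qnz by (simp add: field_simps power_add)
  qed
  have S: "(\<Sum>m\<le>n-i. qpoch (1/q^n) q (i+m) * qpoch (\<alpha>*q^n) q (i+m) * q^(i+m) /
         (qpoch q q (i+m) * qpoch (q/a) q (i+m) * qpoch (q/b) q (i+m)) * qb q (i+m) i * qpoch (1/c) q m)
      = Lam * (qpoch (A*y) q N * qpoch (B*y) q N / (qpoch (A*B*y) q N * qpoch y q N))"
  proof -
    have "(\<Sum>m\<le>n-i. qpoch (1/q^n) q (i+m) * qpoch (\<alpha>*q^n) q (i+m) * q^(i+m) /
         (qpoch q q (i+m) * qpoch (q/a) q (i+m) * qpoch (q/b) q (i+m)) * qb q (i+m) i * qpoch (1/c) q m)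
      = Lam * (\<Sum>m\<le>N. qpoch (1/q^N) q m * qpoch A q m * qpoch B q m * q^m /
            (qpoch q q m * qpoch (A*B*y) q m * qpoch (q/(y*q^N)) q m))"
      unfolding sum_distrib_left N_def[symmetric] by (intro sum.cong refl) (rule trm; simp)
    also have "\<dots> = Lam * (qpoch (A*y) q N * qpoch (B*y) q N / (qpoch (A*B*y) q N * qpoch y q N))"
      using saal3[OF y0 nz_ai(2) ny] by simp
    finally show ?thesis .
  qed
  define E where "E = (-1::complex)^N * q^(tri N + N)"
  have E0: "E \<noteq> 0" unfolding E_def using qnz by simp
  define Qa where "Qa = q/(\<alpha>*a*q^i*q^N)"
  have r_y': "qpoch (q/(y*q^N)) q N = qpoch y q N * E / (y^N * q^(N*N))"
    using r_y y0 qnz unfolding E_def by (simp add: field_simps)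
  have r_a': "qpoch Qa q N = qpoch (\<alpha>*a*q^i) q N * E / ((\<alpha>*a*q^i)^N * q^(N*N))"
    using r_a z1 qnz unfolding E_def Qa_def by (simp add: field_simps)
  have tN: "2 * tri N + N = N * N"
  proof -
    have "2 * tri N = N * (N - 1)" by (rule tri2)
    then show ?thesis by (cases N) auto
  qed
  have sc1: "(\<alpha>*a*q^i)^N * y^N = (\<alpha>*a*b)^N / q^(N*N)"
  proof -
    have "(\<alpha>*a*q^i)^N * y^N = (\<alpha>*a*b * (q^i/q^n))^N" unfolding y_def by (simp add: power_mult_distrib field_simps)
    also have "q^i/q^n = 1/q^N" using nN qnz by (simp add: power_add)
    finally show ?thesis by (simp add: power_mult_distrib power_divide power_mult)
  qed
  have sc2: "c^n * (1/c)^i = (\<alpha>*a*b)^N / q^N"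
    using nN c0 unfolding cdef by (simp add: power_add power_divide field_simps)
  have sc3: "E * E = q^(N*N) * q^N"
  proof -
    have m1: "(-1::complex)^N * (-1)^N = 1"
      by (simp add: power_mult_distrib[symmetric])
    have "E * E = ((-1::complex)^N * (-1)^N) * (q^(tri N + N) * q^(tri N + N))"
      unfolding E_def by (simp add: mult_ac)
    also have "\<dots> = q^(tri N + N + (tri N + N))" unfolding m1 by (simp add: power_add)
    also have "tri N + N + (tri N + N) = N*N + N" using tN by simp
    finally show ?thesis by (simp add: power_add)
  qed
  have brk: "c^n * (1/c)^i * (qpoch (q/(y*q^N)) q N * qpoch Qa q N / (qpoch (\<alpha>*a*q^i) q N * qpoch y q N)) = 1"
  proof -
    have "c^n * (1/c)^i * (qpoch (q/(y*q^N)) q N * qpoch Qa q N / (qpoch (\<alpha>*a*q^i) q N * qpoch y q N))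
        = c^n * (1/c)^i * (E * E) / ((\<alpha>*a*q^i)^N * y^N * q^(N*N) * q^(N*N))"
      unfolding r_y' r_a' using ny nz_aa(2) y0 z1 qnz by (simp add: field_simps)
    also have "\<dots> = 1" unfolding sc1 sc2 sc3 using al a0 b0 qnz by (simp add: field_simps)
    finally show ?thesis .
  qed
  have main: "qpoch (q/a) q n * qpoch (q/b) q n / (qpoch (\<alpha>*a) q n * qpoch (\<alpha>*b) q n) * c^n * (1/c)^i *
     (Lam * (qpoch (A*y) q N * qpoch (B*y) q N / (qpoch (A*B*y) q N * qpoch y q N)))
     = Lam * qpoch (q/a) q i * qpoch (q/b) q i / (qpoch (\<alpha>*a) q i * qpoch (\<alpha>*b) q i) *
       (c^n * (1/c)^i * (qpoch (q/(y*q^N)) q N * qpoch Qa q N / (qpoch (\<alpha>*a*q^i) q N * qpoch y q N)))"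
    unfolding eAy eBy pa pb paa pab Qa_def
    using nz_ai nz_bi nz_aa nz_ab ny by (simp add: field_simps)
  show ?thesis
    unfolding S main brk unfolding Lam_def
    using nz_ai nz_bi nz_aa nz_ab by (simp add: field_simps)
qed

lemma sears_gen:
  assumes al: "\<alpha> \<noteq> 0" and a0: "a \<noteq> 0" and b0: "b \<noteq> 0"
    and cdef: "c = \<alpha>*a*b/q"
    and nqa: "qpoch (q/a) q n \<noteq> 0" and nqb: "qpoch (q/b) q n \<noteq> 0"
    and naa: "qpoch (\<alpha>*a) q n \<noteq> 0" and nab: "qpoch (\<alpha>*b) q n \<noteq> 0"
  shows "(\<Sum>k\<le>n. qpoch (1/q^n) q k * qpoch (\<alpha>*q^n) q k * q^k / (qpoch q q k * qpoch (\<alpha>*a) q k * qpoch (\<alpha>*b) q k) * h k)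
   = qpoch (q/a) q n * qpoch (q/b) q n / (qpoch (\<alpha>*a) q n * qpoch (\<alpha>*b) q n) * c^n *
     (\<Sum>k\<le>n. qpoch (1/q^n) q k * qpoch (\<alpha>*q^n) q k * q^k / (qpoch q q k * qpoch (q/a) q k * qpoch (q/b) q k) *
        (\<Sum>i\<le>k. qb q k i * qpoch (1/c) q (k-i) * (1/c)^i * h i))"
proof -
  let ?P = "qpoch (q/a) q n * qpoch (q/b) q n / (qpoch (\<alpha>*a) q n * qpoch (\<alpha>*b) q n) * c^n"
  let ?r = "\<lambda>k. qpoch (1/q^n) q k * qpoch (\<alpha>*q^n) q k * q^k / (qpoch q q k * qpoch (q/a) q k * qpoch (q/b) q k)"
  have "(\<Sum>k\<le>n. ?r k * (\<Sum>i\<le>k. qb q k i * qpoch (1/c) q (k-i) * (1/c)^i * h i))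
      = (\<Sum>k\<le>n. \<Sum>i\<le>k. ?r k * qb q k i * qpoch (1/c) q (k-i) * (1/c)^i * h i)"
    unfolding sum_distrib_left by (intro sum.cong refl) (simp add: mult.assoc)
  also have "\<dots> = (\<Sum>i\<le>n. \<Sum>m\<le>n-i. ?r (i+m) * qb q (i+m) i * qpoch (1/c) q (i+m-i) * (1/c)^i * h i)"
    by (rule tri_swap)
  also have "\<dots> = (\<Sum>i\<le>n. h i * (1/c)^i * (\<Sum>m\<le>n-i. ?r (i+m) * qb q (i+m) i * qpoch (1/c) q m))"
    unfolding sum_distrib_left by (intro sum.cong refl) (simp add: mult_ac)
  finally have e: "?P * (\<Sum>k\<le>n. ?r k * (\<Sum>i\<le>k. qb q k i * qpoch (1/c) q (k-i) * (1/c)^i * h i))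
     = (\<Sum>i\<le>n. h i * (?P * (1/c)^i * (\<Sum>m\<le>n-i. ?r (i+m) * qb q (i+m) i * qpoch (1/c) q m)))"
    by (simp only: sum_distrib_left) (intro sum.cong refl, simp add: mult_ac)
  show ?thesis unfolding e
  proof (intro sum.cong refl)
    fix i assume "i \<in> {..n}"
    then have iN: "i \<le> n" by simp
    have K: "?P * (1/c)^i * (\<Sum>m\<le>n-i. ?r (i+m) * qb q (i+m) i * qpoch (1/c) q m)
       = qpoch (1/q^n) q i * qpoch (\<alpha>*q^n) q i * q^i / (qpoch q q i * qpoch (\<alpha>*a) q i * qpoch (\<alpha>*b) q i)"
      by (rule kernel[OF iN al a0 b0 cdef nqa nqb naa nab])
    show "qpoch (1/q^n) q i * qpoch (\<alpha>*q^n) q i * q^i / (qpoch q q i * qpoch (\<alpha>*a) q i * qpoch (\<alpha>*b) q i) * h i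
        = h i * (?P * (1/c)^i * (\<Sum>m\<le>n-i. ?r (i+m) * qb q (i+m) i * qpoch (1/c) q m))"
      unfolding K by (simp add: mult.commute)
  qed
qed

lemma tbasis:
  assumes c0: "c \<noteq> 0" and tk: "t \<le> k" and nw: "qpoch w q k \<noteq> 0" and XY: "X*Y = c*w*q^t"
  shows "(\<Sum>i\<le>k. qb q k i * qpoch (1/c) q (k-i) * (1/c)^i * (qb q i t * qpoch X q (i-t) * qpoch Y q (i-t) / qpoch w q i))
    = (1/c)^t * qb q k t * qpoch (X/c) q (k-t) * qpoch (Y/c) q (k-t) / qpoch w q k"
proof -
  define M where "M = k - t"
  have kM: "k = t + M" using tk M_def by simp
  have "(\<Sum>i\<le>k. qb q k i * qpoch (1/c) q (k-i) * (1/c)^i * (qb q i t * qpoch X q (i-t) * qpoch Y q (i-t) / qpoch w q i))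
     = (\<Sum>m\<le>k-t. qb q k (t+m) * qpoch (1/c) q (k-(t+m)) * (1/c)^(t+m) * (qb q (t+m) t * qpoch X q (t+m-t) * qpoch Y q (t+m-t) / qpoch w q (t+m)))"
    by (rule sum_shift_lb[OF tk]) simp
  also have "\<dots> = (\<Sum>m\<le>M. (1/c)^t * qb q k t / qpoch w q k *
        (qb q M m * qpoch X q m * qpoch Y q m * qpoch (X*Y*(1/c)*q^m) q (M-m) * qpoch (1/c) q (M-m) * (1/c)^m))"
  proof (rule sum.cong)
    show "{..k-t} = {..M}" using M_def by simp
  next
    fix m assume "m \<in> {..M}"
    then have mM: "m \<le> M" by simp
    have f1: "qb q k (t+m) * qb q (t+m) t = qb q k t * qb q M m"
      using qb_mult[of t "t+m" k] mM kM by simp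
    have f2: "qpoch w q k = qpoch w q (t+m) * qpoch (X*Y*(1/c)*q^m) q (M-m)"
    proof -
      have "X*Y*(1/c)*q^m = w*q^(t+m)" using XY c0 by (simp add: field_simps power_add)
      then show ?thesis using qpoch_add[of w q "t+m" "M-m"] mM kM by simp
    qed
    have f3: "k-(t+m) = M-m" "t+m-t = m" using kM by simp_all
    have nz: "qpoch w q (t+m) \<noteq> 0" "qpoch (X*Y*(1/c)*q^m) q (M-m) \<noteq> 0" using nw f2 by auto
    show "qb q k (t+m) * qpoch (1/c) q (k-(t+m)) * (1/c)^(t+m) * (qb q (t+m) t * qpoch X q (t+m-t) * qpoch Y q (t+m-t) / qpoch w q (t+m))
      = (1/c)^t * qb q k t / qpoch w q k *
        (qb q M m * qpoch X q m * qpoch Y q m * qpoch (X*Y*(1/c)*q^m) q (M-m) * qpoch (1/c) q (M-m) * (1/c)^m)"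
    proof -
      have "qb q k (t+m) * qpoch (1/c) q (k-(t+m)) * (1/c)^(t+m) * (qb q (t+m) t * qpoch X q (t+m-t) * qpoch Y q (t+m-t) / qpoch w q (t+m))
         = (qb q k (t+m) * qb q (t+m) t) * qpoch (1/c) q (M-m) * ((1/c)^t * (1/c)^m) * qpoch X q m * qpoch Y q m / qpoch w q (t+m)"
        unfolding f3 by (simp add: power_add mult_ac)
      also have "\<dots> = qb q k t * qb q M m * qpoch (1/c) q (M-m) * ((1/c)^t * (1/c)^m) * qpoch X q m * qpoch Y q m
           * qpoch (X*Y*(1/c)*q^m) q (M-m) / (qpoch w q (t+m) * qpoch (X*Y*(1/c)*q^m) q (M-m))"
        unfolding f1 using nz by (simp add: field_simps)
      also have "\<dots> = (1/c)^t * qb q k t / qpoch w q k *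
        (qb q M m * qpoch X q m * qpoch Y q m * qpoch (X*Y*(1/c)*q^m) q (M-m) * qpoch (1/c) q (M-m) * (1/c)^m)"
        unfolding f2 by (simp add: mult_ac)
      finally show ?thesis .
    qed
  qed
  also have "\<dots> = (1/c)^t * qb q k t / qpoch w q k * (qpoch (X*(1/c)) q M * qpoch (Y*(1/c)) q M)"
  proof -
    have sl: "(\<Sum>m\<le>M. qb q M m * qpoch X q m * qpoch Y q m * qpoch (X*Y*(1/c)*q^m) q (M-m) * qpoch (1/c) q (M-m) * (1/c)^m)
       = qpoch (X*(1/c)) q M * qpoch (Y*(1/c)) q M" by (rule saal)
    show ?thesis unfolding sum_distrib_left[symmetric] sl ..
  qed
  finally show ?thesis using M_def by (simp add: field_simps)
qed

lemma aexp: assumes xy: "x*y = r" and nd: "qpoch (p*b) q i \<noteq> 0" and ne: "qpoch (r*c) q i \<noteq> 0"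
  shows "qpoch (p*b) q i * qpoch (r*c) q i * (\<Sum>j\<le>i. qpoch (1/q^i) q j * qpoch b q j * qpoch c q j /
            (qpoch q q j * qpoch (p*b) q j * qpoch (r*c) q j) * (p*r*q^i)^j)
   = (\<Sum>t\<le>i. qb q i t * qpoch (p*b*q^t) q (i-t) * qpoch y q (i-t) *
       (\<Sum>j\<le>t. qb q t j * qpoch c q j * qpoch p q j * r^j * qpoch x q (t-j) * y^(t-j) * qpoch (p*b*q^j) q (t-j)))"
proof -
  have "qpoch (p*b) q i * qpoch (r*c) q i * (\<Sum>j\<le>i. qpoch (1/q^i) q j * qpoch b q j * qpoch c q j /
            (qpoch q q j * qpoch (p*b) q j * qpoch (r*c) q j) * (p*r*q^i)^j)
     = (\<Sum>j\<le>i. qb q i j * (-1)^j * q^(tri j) * qpoch b q j * qpoch c q j * (p*r)^j * qpoch (p*b*q^j) q (i-j) * qpoch (r*c*q^j) q (i-j))"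
    unfolding sum_distrib_left
  proof (rule sum.cong[OF refl])
    fix j assume "j \<in> {..i}"
    then have ji: "j \<le> i" by simp
    have h1: "qpoch (1/q^i) q j = qb q i j * qpoch q q j * (-1)^j * q^(tri j) / q^(i*j)" by (rule r1[OF ji])
    have h2: "qpoch (p*b) q i = qpoch (p*b) q j * qpoch (p*b*q^j) q (i-j)" by (rule qpoch_diff[OF ji])
    have h3: "qpoch (r*c) q i = qpoch (r*c) q j * qpoch (r*c*q^j) q (i-j)" by (rule qpoch_diff[OF ji])
    have h4: "(p*r*q^i)^j = (p*r)^j * q^(i*j)" by (simp add: power_mult_distrib power_mult)
    have nz: "qpoch (p*b) q j \<noteq> 0" "qpoch (r*c) q j \<noteq> 0" "qpoch q q j \<noteq> 0" "q^(i*j) \<noteq> 0"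
      using nd ne h2 h3 Qnz qnz by auto
    show "qpoch (p*b) q i * qpoch (r*c) q i * (qpoch (1/q^i) q j * qpoch b q j * qpoch c q j /
            (qpoch q q j * qpoch (p*b) q j * qpoch (r*c) q j) * (p*r*q^i)^j)
       = qb q i j * (-1)^j * q^(tri j) * qpoch b q j * qpoch c q j * (p*r)^j * qpoch (p*b*q^j) q (i-j) * qpoch (r*c*q^j) q (i-j)"
      unfolding h1 h4 using nz qnz by (subst h2, subst h3) (simp add: field_simps)
  qed
  also have "\<dots> = (\<Sum>t\<le>i. qb q i t * qpoch (p*b*q^t) q (i-t) * qpoch y q (i-t) *
       (\<Sum>j\<le>t. qb q t j * qpoch c q j * qpoch p q j * r^j * qpoch x q (t-j) * y^(t-j) * qpoch (p*b*q^j) q (t-j)))"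
    by (rule ge[OF xy])
  finally show ?thesis .
qed

lemma ci: assumes u0: "u \<noteq> 0" and v0: "v \<noteq> 0" and c0: "c \<noteq> 0"
  shows "(\<Sum>j\<le>t. qb q t j * qpoch (1/v) q j * qpoch (\<beta>*u) q j * (\<gamma>*v)^j * qpoch (c/u) q (t-j) * (\<gamma>*u*v/c)^(t-j) * qpoch (\<beta>*q^j) q (t-j))
   = (1/c)^t * (\<Sum>j\<le>t. qb q t j * qpoch (c/v) q j * qpoch (\<beta>*u) q j * (\<gamma>*v)^j * qpoch (1/u) q (t-j) * (\<gamma>*u*v)^(t-j) * qpoch (\<beta>*c*q^j) q (t-j))"
proof -
  define L where "L = (\<Sum>j\<le>t. qb q t j * (-1)^j * q^(tri j) * qpoch (\<beta>*v) q j * qpoch (\<beta>*u) q j * (c/(u*v))^j * qpoch (\<beta>*q^j) q (t-j) * qpoch (\<beta>*c*q^j) q (t-j))"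
  have a1: "1/v*(\<beta>*v) = \<beta>" "c/u*(\<beta>*u) = \<beta>*c" "1/v*(c/u) = c/(u*v)" "c/v*(\<beta>*v) = \<beta>*c"
      "1/u*(\<beta>*u) = \<beta>" "c/v*(1/u) = c/(u*v)"
    using u0 v0 by (simp_all add: field_simps)
  have S1: "(\<Sum>j\<le>t. qb q t j * qpoch (\<beta>*u) q j * qpoch (1/v) q j * (c/u)^j * qpoch (\<beta>*q^j) q (t-j) * qpoch (c/u) q (t-j)) = L"
    using t313[of t "\<beta>*v" "\<beta>*u" "1/v" "c/u"] unfolding L_def by (simp only: a1 mult.assoc; simp add: mult_ac)
  have S2: "(\<Sum>j\<le>t. qb q t j * qpoch (\<beta>*u) q j * qpoch (c/v) q j * (1/u)^j * qpoch (\<beta>*c*q^j) q (t-j) * qpoch (1/u) q (t-j)) = L"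
    using t313[of t "\<beta>*v" "\<beta>*u" "c/v" "1/u"] unfolding L_def by (simp only: a1 mult.assoc; simp add: mult_ac)
  have E1: "(\<Sum>j\<le>t. qb q t j * qpoch (1/v) q j * qpoch (\<beta>*u) q j * (\<gamma>*v)^j * qpoch (c/u) q (t-j) * (\<gamma>*u*v/c)^(t-j) * qpoch (\<beta>*q^j) q (t-j))
      = (\<gamma>*u*v/c)^t * (\<Sum>j\<le>t. qb q t j * qpoch (\<beta>*u) q j * qpoch (1/v) q j * (c/u)^j * qpoch (\<beta>*q^j) q (t-j) * qpoch (c/u) q (t-j))"
    unfolding sum_distrib_left
  proof (rule sum.cong[OF refl])
    fix j assume "j \<in> {..t}"
    then have jt: "j \<le> t" by simp
    have pw: "(\<gamma>*v)^j * (\<gamma>*u*v/c)^(t-j) = (\<gamma>*u*v/c)^t * (c/u)^j"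
    proof -
      have "(\<gamma>*u*v/c)^t = (\<gamma>*u*v/c)^j * (\<gamma>*u*v/c)^(t-j)" using jt by (simp flip: power_add)
      moreover have "(\<gamma>*u*v/c)^j * (c/u)^j = (\<gamma>*v)^j" using u0 c0 by (simp flip: power_mult_distrib)
      ultimately show ?thesis by (simp add: mult_ac)
    qed
    show "qb q t j * qpoch (1/v) q j * qpoch (\<beta>*u) q j * (\<gamma>*v)^j * qpoch (c/u) q (t-j) * (\<gamma>*u*v/c)^(t-j) * qpoch (\<beta>*q^j) q (t-j)
      = (\<gamma>*u*v/c)^t * (qb q t j * qpoch (\<beta>*u) q j * qpoch (1/v) q j * (c/u)^j * qpoch (\<beta>*q^j) q (t-j) * qpoch (c/u) q (t-j))"
      using pw by (simp add: mult_ac)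
  qed
  have E2: "(\<Sum>j\<le>t. qb q t j * qpoch (c/v) q j * qpoch (\<beta>*u) q j * (\<gamma>*v)^j * qpoch (1/u) q (t-j) * (\<gamma>*u*v)^(t-j) * qpoch (\<beta>*c*q^j) q (t-j))
      = (\<gamma>*u*v)^t * (\<Sum>j\<le>t. qb q t j * qpoch (\<beta>*u) q j * qpoch (c/v) q j * (1/u)^j * qpoch (\<beta>*c*q^j) q (t-j) * qpoch (1/u) q (t-j))"
    unfolding sum_distrib_left
  proof (rule sum.cong[OF refl])
    fix j assume "j \<in> {..t}"
    then have jt: "j \<le> t" by simp
    have pw: "(\<gamma>*v)^j * (\<gamma>*u*v)^(t-j) = (\<gamma>*u*v)^t * (1/u)^j"
    proof -
      have "(\<gamma>*u*v)^t = (\<gamma>*u*v)^j * (\<gamma>*u*v)^(t-j)" using jt by (simp flip: power_add)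
      moreover have "(\<gamma>*u*v)^j * (1/u)^j = (\<gamma>*v)^j" using u0 by (simp flip: power_mult_distrib)
      ultimately show ?thesis by (simp add: mult_ac)
    qed
    show "qb q t j * qpoch (c/v) q j * qpoch (\<beta>*u) q j * (\<gamma>*v)^j * qpoch (1/u) q (t-j) * (\<gamma>*u*v)^(t-j) * qpoch (\<beta>*c*q^j) q (t-j)
      = (\<gamma>*u*v)^t * (qb q t j * qpoch (\<beta>*u) q j * qpoch (c/v) q j * (1/u)^j * qpoch (\<beta>*c*q^j) q (t-j) * qpoch (1/u) q (t-j))"
      using pw by (simp add: mult_ac)
  qed
  show ?thesis unfolding E1 E2 S1 S2 using c0 by (simp add: power_divide power_mult_distrib field_simps)
qed

lemma stepC:
  assumes u0: "u \<noteq> 0" and v0: "v \<noteq> 0" and c0: "c \<noteq> 0"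
    and nw: "qpoch (\<beta>*\<gamma>*u*v) q k \<noteq> 0"
    and nbc: "qpoch (\<beta>*c) q k \<noteq> 0" and ngc: "qpoch (\<gamma>*c) q k \<noteq> 0"
    and nb: "qpoch \<beta> q k \<noteq> 0" and ng: "qpoch \<gamma> q k \<noteq> 0"
  shows "qpoch \<beta> q k * qpoch \<gamma> q k / qpoch (\<beta>*\<gamma>*u*v) q k *
      (\<Sum>j\<le>k. qpoch (1/q^k) q j * qpoch (1/u) q j * qpoch (1/v) q j / (qpoch q q j * qpoch \<beta> q j * qpoch \<gamma> q j) * (\<beta>*\<gamma>*u*v*q^k)^j)
    = (\<Sum>i\<le>k. qb q k i * qpoch (1/c) q (k-i) * (1/c)^i *
      (qpoch (\<beta>*c) q i * qpoch (\<gamma>*c) q i / qpoch (\<beta>*\<gamma>*u*v) q i *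
      (\<Sum>j\<le>i. qpoch (1/q^i) q j * qpoch (c/u) q j * qpoch (c/v) q j / (qpoch q q j * qpoch (\<beta>*c) q j * qpoch (\<gamma>*c) q j) * (\<beta>*\<gamma>*u*v*q^i)^j)))"
proof -
  let ?w = "\<beta>*\<gamma>*u*v"
  let ?EL = "\<lambda>t. (\<Sum>j\<le>t. qb q t j * qpoch (c/v) q j * qpoch (\<beta>*u) q j * (\<gamma>*v)^j * qpoch (1/u) q (t-j) * (\<gamma>*u*v)^(t-j) * qpoch (\<beta>*c*q^j) q (t-j))"
  let ?ER = "\<lambda>t. (\<Sum>j\<le>t. qb q t j * qpoch (1/v) q j * qpoch (\<beta>*u) q j * (\<gamma>*v)^j * qpoch (c/u) q (t-j) * (\<gamma>*u*v/c)^(t-j) * qpoch (\<beta>*q^j) q (t-j))"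
  have r1': "\<beta>*u*(c/u) = \<beta>*c" "\<gamma>*v*(c/v) = \<gamma>*c" "\<beta>*u*(\<gamma>*v) = \<beta>*\<gamma>*u*v"
     "\<beta>*u*(1/u) = \<beta>" "\<gamma>*v*(1/v) = \<gamma>" "1/u*(\<gamma>*u*v) = \<gamma>*v" "c/u*(\<gamma>*u*v/c) = \<gamma>*v"
    using u0 v0 c0 by (simp_all add: field_simps)
  have A: "qpoch (\<beta>*c) q i * qpoch (\<gamma>*c) q i *
      (\<Sum>j\<le>i. qpoch (1/q^i) q j * qpoch (c/u) q j * qpoch (c/v) q j / (qpoch q q j * qpoch (\<beta>*c) q j * qpoch (\<gamma>*c) q j) * (\<beta>*\<gamma>*u*v*q^i)^j)
    = (\<Sum>t\<le>i. qb q i t * qpoch (\<beta>*c*q^t) q (i-t) * qpoch (\<gamma>*u*v) q (i-t) * ?EL t)" if ik: "i \<le> k" for i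
  proof -
    have nz: "qpoch (\<beta>*u*(c/u)) q i \<noteq> 0" "qpoch (\<gamma>*v*(c/v)) q i \<noteq> 0"
      using nbc ngc qpoch_diff[OF ik, of "\<beta>*c" q] qpoch_diff[OF ik, of "\<gamma>*c" q] r1' by auto
    have xy: "1/u*(\<gamma>*u*v) = \<gamma>*v" by (rule r1'(6))
    show ?thesis using aexp[OF xy nz] by (simp only: r1')
  qed
  have B: "qpoch \<beta> q k * qpoch \<gamma> q k *
      (\<Sum>j\<le>k. qpoch (1/q^k) q j * qpoch (1/u) q j * qpoch (1/v) q j / (qpoch q q j * qpoch \<beta> q j * qpoch \<gamma> q j) * (\<beta>*\<gamma>*u*v*q^k)^j)
    = (\<Sum>t\<le>k. qb q k t * qpoch (\<beta>*q^t) q (k-t) * qpoch (\<gamma>*u*v/c) q (k-t) * ?ER t)"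
  proof -
    have nz: "qpoch (\<beta>*u*(1/u)) q k \<noteq> 0" "qpoch (\<gamma>*v*(1/v)) q k \<noteq> 0"
      using nb ng r1' by auto
    have xy: "c/u*(\<gamma>*u*v/c) = \<gamma>*v" by (rule r1'(7))
    show ?thesis using aexp[OF xy nz] by (simp only: r1')
  qed
  have C1: "(\<Sum>i\<le>k. qb q k i * qpoch (1/c) q (k-i) * (1/c)^i *
      (qpoch (\<beta>*c) q i * qpoch (\<gamma>*c) q i / qpoch ?w q i *
      (\<Sum>j\<le>i. qpoch (1/q^i) q j * qpoch (c/u) q j * qpoch (c/v) q j / (qpoch q q j * qpoch (\<beta>*c) q j * qpoch (\<gamma>*c) q j) * (\<beta>*\<gamma>*u*v*q^i)^j)))
    = (\<Sum>i\<le>k. \<Sum>t\<le>k. qb q k i * qpoch (1/c) q (k-i) * (1/c)^i *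
         (qb q i t * qpoch (\<beta>*c*q^t) q (i-t) * qpoch (\<gamma>*u*v) q (i-t) / qpoch ?w q i) * ?EL t)"
  proof (rule sum.cong[OF refl])
    fix i assume "i \<in> {..k}"
    then have ik: "i \<le> k" by simp
    have "qpoch (\<beta>*c) q i * qpoch (\<gamma>*c) q i / qpoch ?w q i *
      (\<Sum>j\<le>i. qpoch (1/q^i) q j * qpoch (c/u) q j * qpoch (c/v) q j / (qpoch q q j * qpoch (\<beta>*c) q j * qpoch (\<gamma>*c) q j) * (\<beta>*\<gamma>*u*v*q^i)^j)
      = (\<Sum>t\<le>i. qb q i t * qpoch (\<beta>*c*q^t) q (i-t) * qpoch (\<gamma>*u*v) q (i-t) * ?EL t) / qpoch ?w q i"
      using A[OF ik] by (simp add: field_simps)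
    also have "\<dots> = (\<Sum>t\<le>k. qb q i t * qpoch (\<beta>*c*q^t) q (i-t) * qpoch (\<gamma>*u*v) q (i-t) * ?EL t) / qpoch ?w q i"
      by (subst sum_extend[OF ik]) simp_all
    finally show "qb q k i * qpoch (1/c) q (k-i) * (1/c)^i *
      (qpoch (\<beta>*c) q i * qpoch (\<gamma>*c) q i / qpoch ?w q i *
      (\<Sum>j\<le>i. qpoch (1/q^i) q j * qpoch (c/u) q j * qpoch (c/v) q j / (qpoch q q j * qpoch (\<beta>*c) q j * qpoch (\<gamma>*c) q j) * (\<beta>*\<gamma>*u*v*q^i)^j))
      = (\<Sum>t\<le>k. qb q k i * qpoch (1/c) q (k-i) * (1/c)^i *
         (qb q i t * qpoch (\<beta>*c*q^t) q (i-t) * qpoch (\<gamma>*u*v) q (i-t) / qpoch ?w q i) * ?EL t)"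
      by (simp add: sum_distrib_left sum_divide_distrib mult_ac)
  qed
  also have "\<dots> = (\<Sum>t\<le>k. \<Sum>i\<le>k. qb q k i * qpoch (1/c) q (k-i) * (1/c)^i *
         (qb q i t * qpoch (\<beta>*c*q^t) q (i-t) * qpoch (\<gamma>*u*v) q (i-t) / qpoch ?w q i) * ?EL t)"
    by (rule sum.swap)
  also have "\<dots> = (\<Sum>t\<le>k. ?EL t * ((1/c)^t * qb q k t * qpoch (\<beta>*c*q^t/c) q (k-t) * qpoch (\<gamma>*u*v/c) q (k-t) / qpoch ?w q k))"
  proof (rule sum.cong[OF refl])
    fix t assume "t \<in> {..k}"
    then have tk: "t \<le> k" by simp
    have XY: "\<beta>*c*q^t*(\<gamma>*u*v) = c*?w*q^t" by (simp add: mult_ac)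
    show "(\<Sum>i\<le>k. qb q k i * qpoch (1/c) q (k-i) * (1/c)^i *
         (qb q i t * qpoch (\<beta>*c*q^t) q (i-t) * qpoch (\<gamma>*u*v) q (i-t) / qpoch ?w q i) * ?EL t)
      = ?EL t * ((1/c)^t * qb q k t * qpoch (\<beta>*c*q^t/c) q (k-t) * qpoch (\<gamma>*u*v/c) q (k-t) / qpoch ?w q k)"
      unfolding sum_distrib_right[symmetric] tbasis[OF c0 tk nw XY] by (simp add: mult.commute)
  qed
  also have "\<dots> = (\<Sum>t\<le>k. ?ER t * (qb q k t * qpoch (\<beta>*q^t) q (k-t) * qpoch (\<gamma>*u*v/c) q (k-t) / qpoch ?w q k))"
  proof (rule sum.cong[OF refl])
    fix t assume "t \<in> {..k}"
    have e: "\<beta>*c*q^t/c = \<beta>*q^t" using c0 by simp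
    show "?EL t * ((1/c)^t * qb q k t * qpoch (\<beta>*c*q^t/c) q (k-t) * qpoch (\<gamma>*u*v/c) q (k-t) / qpoch ?w q k)
      = ?ER t * (qb q k t * qpoch (\<beta>*q^t) q (k-t) * qpoch (\<gamma>*u*v/c) q (k-t) / qpoch ?w q k)"
      unfolding e ci[OF u0 v0 c0, of t \<beta> \<gamma>] by (simp add: mult_ac)
  qed
  also have "\<dots> = (\<Sum>t\<le>k. qb q k t * qpoch (\<beta>*q^t) q (k-t) * qpoch (\<gamma>*u*v/c) q (k-t) * ?ER t) / qpoch ?w q k"
    by (simp add: sum_divide_distrib mult_ac)
  finally show ?thesis unfolding B[symmetric] by (simp add: field_simps)
qed

lemma qpoch_zero[simp]: "qpoch 0 q k = 1"
  by (simp add: qpoch_def)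

lemma sumA0: "(\<Sum>j\<le>k. qpoch (1/q^k) q j * (z*q^k)^j / qpoch q q j) = qpoch z q k"
proof -
  have "(\<Sum>j\<le>k. qpoch (1/q^k) q j * (z*q^k)^j / qpoch q q j) = (\<Sum>j\<le>k. qb q k j * (-z)^j * q^(tri j) * qpoch 0 q j * qpoch (z*0*q^j) q (k-j))"
  proof (rule sum.cong[OF refl])
    fix j assume "j \<in> {..k}"
    then have jk: "j \<le> k" by simp
    show "qpoch (1/q^k) q j * (z*q^k)^j / qpoch q q j = qb q k j * (-z)^j * q^(tri j) * qpoch 0 q j * qpoch (z*0*q^j) q (k-j)"
    proof -
      have pk: "(q^k)^j = q^(j*k)" "(q^j)^k = q^(j*k)"
        by (simp_all only: power_mult[symmetric] mult.commute)
      show ?thesis unfolding r1[OF jk] using Qnz[of j] qnz pk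
        by (simp add: power_mult_distrib power_minus[of z] field_simps)
    qed
  qed
  also have "\<dots> = qpoch z q k" by (rule cv2p)
  finally show ?thesis .
qed

lemma sumL0: "(\<Sum>k\<le>n. qpoch (1/q^n) q k * q^k / qpoch q q k) = qpoch (q/q^n) q n"
  using sumA0[of n "q/q^n"] qnz by (simp add: power_mult_distrib)

lemma qpoch_vanish: "0 < n \<Longrightarrow> qpoch (q/q^n) q n = 0"
proof -
  assume n: "0 < n"
  have "1 - q/q^n*q^(n-1) = 0" using n qnz by (cases n) (simp_all add: field_simps)
  then show ?thesis unfolding qpoch_def using n by (intro prod_zero) (auto intro!: bexI[of _ "n-1"])
qed

end

lemma bhs_conv:
  assumes q0: "q \<noteq> 0"
  shows "bhs [1/q^k, X, Y] [D, E] q z =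
    (\<Sum>j\<le>k. qpoch (1/q^k) q j * qpoch X q j * qpoch Y q j / (qpoch q q j * qpoch D q j * qpoch E q j) * z^j)"
proof -
  have z: "qpoch (1/q^k) q j = 0" if "j \<notin> {..k}" for j
    unfolding qpoch_def using q0 that by (intro prod_zero) (auto intro!: bexI[of _ k])
  have "bhs [1/q^k, X, Y] [D, E] q z = (\<Sum>j. qpoch (1/q^k) q j * qpoch X q j * qpoch Y q j / (qpoch q q j * qpoch D q j * qpoch E q j) * z^j)"
    unfolding bhs_def qpochs_def by (simp add: mult_ac)
  also have "\<dots> = (\<Sum>j\<le>k. qpoch (1/q^k) q j * qpoch X q j * qpoch Y q j / (qpoch q q j * qpoch D q j * qpoch E q j) * z^j)"
    by (rule suminf_finite) (auto simp: z)
  finally show ?thesis .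
qed

lemma Qnz_of: assumes "cmod q < 1" shows "qpoch q q n \<noteq> 0"
proof -
  have "1 - q * q^k \<noteq> 0" for k
  proof
    assume "1 - q * q^k = 0"
    then have "q^(Suc k) = 1" by simp
    then have "cmod q ^ Suc k = 1" by (metis norm_one norm_power)
    moreover have "cmod q ^ Suc k < 1"
    proof (cases "q = 0")
      case True then show ?thesis by simp
    next
      case False then show ?thesis using assms by (intro power_Suc_less_one) auto
    qed
    ultimately show False by simp
  qed
  then show ?thesis unfolding qpoch_def by (simp add: prod_zero_iff)
qed


theorem theorem3p7:
  fixes q \<alpha> a b \<beta> \<gamma> u v :: complex and n :: nat
  assumes "0 < cmod q" "cmod q < 1"
    and "a \<noteq> 0" "b \<noteq> 0" "u \<noteq> 0" "v \<noteq> 0"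
    and "qpoch (\<alpha> * a) q n \<noteq> 0" "qpoch (\<alpha> * b) q n \<noteq> 0"
    and "qpoch (\<beta> * \<gamma> * u * v) q n \<noteq> 0"
    and "qpoch (\<alpha> * \<beta> * a * b / q) q n \<noteq> 0" "qpoch (\<alpha> * \<gamma> * a * b / q) q n \<noteq> 0"
    and "qpoch (q / a) q n \<noteq> 0" "qpoch (q / b) q n \<noteq> 0"
    and "qpoch \<beta> q n \<noteq> 0" "qpoch \<gamma> q n \<noteq> 0"
  shows "(\<Sum>k=0..n.
      qpochs [1 / q ^ n, \<alpha> * q ^ n, \<alpha> * \<beta> * a * b / q, \<alpha> * \<gamma> * a * b / q] q k * q ^ k
      / qpochs [q, \<alpha> * a, \<alpha> * b, \<beta> * \<gamma> * u * v] q k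
      * bhs [1 / q ^ k, \<alpha> * a * b / (q * u), \<alpha> * a * b / (q * v)]
            [\<alpha> * \<beta> * a * b / q, \<alpha> * \<gamma> * a * b / q] q (\<beta> * \<gamma> * u * v * q ^ k))
   = qpochs [q / a, q / b] q n / qpochs [\<alpha> * a, \<alpha> * b] q n * (\<alpha> * a * b / q) ^ n
     * (\<Sum>k=0..n.
      qpochs [1 / q ^ n, \<alpha> * q ^ n, \<beta>, \<gamma>] q k * q ^ k
      / qpochs [q, q / a, q / b, \<beta> * \<gamma> * u * v] q k
      * bhs [1 / q ^ k, 1 / u, 1 / v] [\<beta>, \<gamma>] q (\<beta> * \<gamma> * u * v * q ^ k))"
proof -
  have q0: "q \<noteq> 0" using assms(1) by auto
  interpret qctx q
    by unfold_locales (use Qnz_of[OF assms(2)] q0 in auto)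
  have nzk: "qpoch x q k \<noteq> 0" if "qpoch x q n \<noteq> 0" "k \<le> n" for x k
    using that qpoch_diff[OF that(2), of x q] by auto
  have bA: "bhs [1/q^k, \<alpha>*a*b/(q*u), \<alpha>*a*b/(q*v)] [\<alpha>*\<beta>*a*b/q, \<alpha>*\<gamma>*a*b/q] q (\<beta>*\<gamma>*u*v*q^k)
     = (\<Sum>j\<le>k. qpoch (1/q^k) q j * qpoch (\<alpha>*a*b/(q*u)) q j * qpoch (\<alpha>*a*b/(q*v)) q j /
         (qpoch q q j * qpoch (\<alpha>*\<beta>*a*b/q) q j * qpoch (\<alpha>*\<gamma>*a*b/q) q j) * (\<beta>*\<gamma>*u*v*q^k)^j)" for k
    by (rule bhs_conv[OF q0])
  have bB: "bhs [1/q^k, 1/u, 1/v] [\<beta>, \<gamma>] q (\<beta>*\<gamma>*u*v*q^k)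
     = (\<Sum>j\<le>k. qpoch (1/q^k) q j * qpoch (1/u) q j * qpoch (1/v) q j /
         (qpoch q q j * qpoch \<beta> q j * qpoch \<gamma> q j) * (\<beta>*\<gamma>*u*v*q^k)^j)" for k
    by (rule bhs_conv[OF q0])
  show ?thesis
  proof (cases "\<alpha> = 0")
    case False
    define c where "c = \<alpha>*a*b/q"
    have c0: "c \<noteq> 0" using False assms(3,4) q0 c_def by simp
    have e1: "\<alpha>*\<beta>*a*b/q = \<beta>*c" and e2: "\<alpha>*\<gamma>*a*b/q = \<gamma>*c"
      and e3: "\<alpha>*a*b/(q*u) = c/u" and e4: "\<alpha>*a*b/(q*v) = c/v"
      unfolding c_def by (simp_all add: field_simps)
    define f where "f i = qpoch (\<beta>*c) q i * qpoch (\<gamma>*c) q i / qpoch (\<beta>*\<gamma>*u*v) q i *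
      (\<Sum>j\<le>i. qpoch (1/q^i) q j * qpoch (c/u) q j * qpoch (c/v) q j / (qpoch q q j * qpoch (\<beta>*c) q j * qpoch (\<gamma>*c) q j) * (\<beta>*\<gamma>*u*v*q^i)^j)" for i
    define g where "g k = qpoch \<beta> q k * qpoch \<gamma> q k / qpoch (\<beta>*\<gamma>*u*v) q k *
      (\<Sum>j\<le>k. qpoch (1/q^k) q j * qpoch (1/u) q j * qpoch (1/v) q j / (qpoch q q j * qpoch \<beta> q j * qpoch \<gamma> q j) * (\<beta>*\<gamma>*u*v*q^k)^j)" for k
    let ?P = "qpoch (q/a) q n * qpoch (q/b) q n / (qpoch (\<alpha>*a) q n * qpoch (\<alpha>*b) q n) * c^n"
    have L: "(\<Sum>k=0..n.
      qpochs [1 / q ^ n, \<alpha> * q ^ n, \<alpha> * \<beta> * a * b / q, \<alpha> * \<gamma> * a * b / q] q k * q ^ k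
      / qpochs [q, \<alpha> * a, \<alpha> * b, \<beta> * \<gamma> * u * v] q k
      * bhs [1 / q ^ k, \<alpha> * a * b / (q * u), \<alpha> * a * b / (q * v)]
            [\<alpha> * \<beta> * a * b / q, \<alpha> * \<gamma> * a * b / q] q (\<beta> * \<gamma> * u * v * q ^ k))
      = (\<Sum>k\<le>n. qpoch (1/q^n) q k * qpoch (\<alpha>*q^n) q k * q^k / (qpoch q q k * qpoch (\<alpha>*a) q k * qpoch (\<alpha>*b) q k) * f k)"
      unfolding atLeast0AtMost bA unfolding e1 e2 e3 e4
      by (intro sum.cong refl) (simp add: f_def qpochs_def mult_ac)
    have R: "qpochs [q / a, q / b] q n / qpochs [\<alpha> * a, \<alpha> * b] q n * (\<alpha> * a * b / q) ^ n
     * (\<Sum>k=0..n.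
      qpochs [1 / q ^ n, \<alpha> * q ^ n, \<beta>, \<gamma>] q k * q ^ k
      / qpochs [q, q / a, q / b, \<beta> * \<gamma> * u * v] q k
      * bhs [1 / q ^ k, 1 / u, 1 / v] [\<beta>, \<gamma>] q (\<beta> * \<gamma> * u * v * q ^ k))
      = ?P * (\<Sum>k\<le>n. qpoch (1/q^n) q k * qpoch (\<alpha>*q^n) q k * q^k / (qpoch q q k * qpoch (q/a) q k * qpoch (q/b) q k) * g k)"
    proof -
      have R1: "qpochs [q / a, q / b] q n / qpochs [\<alpha> * a, \<alpha> * b] q n * (\<alpha> * a * b / q) ^ n = ?P"
        by (simp add: qpochs_def c_def)
      have R2: "(\<Sum>k=0..n.
      qpochs [1 / q ^ n, \<alpha> * q ^ n, \<beta>, \<gamma>] q k * q ^ k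
      / qpochs [q, q / a, q / b, \<beta> * \<gamma> * u * v] q k
      * bhs [1 / q ^ k, 1 / u, 1 / v] [\<beta>, \<gamma>] q (\<beta> * \<gamma> * u * v * q ^ k))
        = (\<Sum>k\<le>n. qpoch (1/q^n) q k * qpoch (\<alpha>*q^n) q k * q^k / (qpoch q q k * qpoch (q/a) q k * qpoch (q/b) q k) * g k)"
        unfolding atLeast0AtMost bB by (intro sum.cong refl) (simp add: g_def qpochs_def mult_ac)
      show ?thesis by (simp only: R1 R2)
    qed
    have SG: "(\<Sum>k\<le>n. qpoch (1/q^n) q k * qpoch (\<alpha>*q^n) q k * q^k / (qpoch q q k * qpoch (\<alpha>*a) q k * qpoch (\<alpha>*b) q k) * f k)
      = ?P * (\<Sum>k\<le>n. qpoch (1/q^n) q k * qpoch (\<alpha>*q^n) q k * q^k / (qpoch q q k * qpoch (q/a) q k * qpoch (q/b) q k) *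
        (\<Sum>i\<le>k. qb q k i * qpoch (1/c) q (k-i) * (1/c)^i * f i))"
      by (rule sears_gen[OF False assms(3) assms(4) c_def assms(12) assms(13) assms(7) assms(8)])
    have SC: "(\<Sum>i\<le>k. qb q k i * qpoch (1/c) q (k-i) * (1/c)^i * f i) = g k" if kn: "k \<le> n" for k
    proof -
      have nw: "qpoch (\<beta>*\<gamma>*u*v) q k \<noteq> 0" by (rule nzk[OF assms(9) kn])
      have nbc: "qpoch (\<beta>*c) q k \<noteq> 0" using nzk[OF assms(10) kn] e1 by simp
      have ngc: "qpoch (\<gamma>*c) q k \<noteq> 0" using nzk[OF assms(11) kn] e2 by simp
      have nb: "qpoch \<beta> q k \<noteq> 0" by (rule nzk[OF assms(14) kn])
      have ng: "qpoch \<gamma> q k \<noteq> 0" by (rule nzk[OF assms(15) kn])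
      show ?thesis unfolding f_def g_def
        by (rule stepC[OF assms(5) assms(6) c0 nw nbc ngc nb ng, symmetric])
    qed
    show ?thesis unfolding L R SG
      by (intro arg_cong[where f="\<lambda>x. ?P * x"] sum.cong refl) (simp add: SC)
  next
    case True
    have LHS0: "(\<Sum>k=0..n.
      qpochs [1 / q ^ n, \<alpha> * q ^ n, \<alpha> * \<beta> * a * b / q, \<alpha> * \<gamma> * a * b / q] q k * q ^ k
      / qpochs [q, \<alpha> * a, \<alpha> * b, \<beta> * \<gamma> * u * v] q k
      * bhs [1 / q ^ k, \<alpha> * a * b / (q * u), \<alpha> * a * b / (q * v)]
            [\<alpha> * \<beta> * a * b / q, \<alpha> * \<gamma> * a * b / q] q (\<beta> * \<gamma> * u * v * q ^ k))
      = (\<Sum>k\<le>n. qpoch (1/q^n) q k * q^k / qpoch q q k)"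
      unfolding atLeast0AtMost bA
    proof (rule sum.cong[OF refl])
      fix k assume "k \<in> {..n}"
      then have kn: "k \<le> n" by simp
      have nw: "qpoch (\<beta>*\<gamma>*u*v) q k \<noteq> 0" by (rule nzk[OF assms(9) kn])
      have s0: "(\<Sum>j\<le>k. qpoch (1/q^k) q j * (\<beta>*\<gamma>*u*v*q^k)^j / qpoch q q j) = qpoch (\<beta>*\<gamma>*u*v) q k"
        by (rule sumA0)
      show "qpochs [1 / q ^ n, \<alpha> * q ^ n, \<alpha> * \<beta> * a * b / q, \<alpha> * \<gamma> * a * b / q] q k * q ^ k
      / qpochs [q, \<alpha> * a, \<alpha> * b, \<beta> * \<gamma> * u * v] q k
      * (\<Sum>j\<le>k. qpoch (1/q^k) q j * qpoch (\<alpha>*a*b/(q*u)) q j * qpoch (\<alpha>*a*b/(q*v)) q j /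
         (qpoch q q j * qpoch (\<alpha>*\<beta>*a*b/q) q j * qpoch (\<alpha>*\<gamma>*a*b/q) q j) * (\<beta>*\<gamma>*u*v*q^k)^j)
        = qpoch (1/q^n) q k * q^k / qpoch q q k"
        using True s0 nw by (simp add: qpochs_def field_simps)
    qed
    show ?thesis
    proof (cases "n = 0")
      case True
      then show ?thesis using bA[of 0] bB[of 0] by (simp add: qpochs_def)
    next
      case False
      then show ?thesis unfolding LHS0 sumL0 using \<open>\<alpha> = 0\<close> qpoch_vanish[of n] by simp
    qed
  qed
qed

end
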